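(* Every independent set of size $14$ in $C_{5,14}^{\boxtimes 3}$ is Lee equivalent to $\{t\cdot(1,3,9): t\in\mathbb Z_{14}\}\subseteq\mathbb Z_{14}^3$ (arithmetic modulo $14$); in particular, up to Lee equivalence there is a unique independent set of size $14$ in $C_{5,14}^{\boxtimes 3}$.
   Context: For positive integers $q,d$ with $q\ge 2d$, the circular graph $C_{d,q}$ has vertex set $\mathbb Z_q$, two distinct vertices $x,y$ being adjacent iff $\min\{|x-y|,q-|x-y|\}<d$ (viewing $x,y$ as integers in $\{0,\dots,q-1\}$). For a graph $G=(V,E)$, $G^{\boxtimes n}$ has vertex set $V^n$, distinct $(u_i)$, $(v_i)$ adjacent iff for every $i$ either $u_i=v_i$ or $u_iv_i\in E$. An independent set is a set of pairwise non-adjacent vertices. Let $D_q$ be the dihedral group of order $2q$ acting on $\mathbb Z_q$ by $x\mapsto\pm x+c$ ($c\in\mathbb Z_q$); $D_q^n\rtimes S_n$ acts on $\mathbb Z_q^n$ by acting with $D_q$ in each coordinate separately and permuting coordinates. Sets $C,D\subseteq\mathbb Z_q^n$ are Lee equivalent if $g\cdot C=D$ for some $g\in D_q^n\rtimes S_n$. *)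

theory Defs
  imports Main "HOL-Combinatorics.Permutations"
begin

text \<open>Elements of Z_q are represented by integers in {0..<q}; vertices of
  the n-fold strong power are integer lists of length n with entries in {0..<q}.\<close>

definition circ_adj :: "nat \<Rightarrow> nat \<Rightarrow> int \<Rightarrow> int \<Rightarrow> bool" where
  "circ_adj d q x y \<longleftrightarrow> x \<noteq> y \<and> min \<bar>x - y\<bar> (int q - \<bar>x - y\<bar>) < int d"

definition sp_vertices :: "nat \<Rightarrow> nat \<Rightarrow> int list set" where
  "sp_vertices q n = {x. length x = n \<and> set x \<subseteq> {0..<int q}}"

definition sp_adj :: "nat \<Rightarrow> nat \<Rightarrow> nat \<Rightarrow> int list \<Rightarrow> int list \<Rightarrow> bool" where
  "sp_adj d q n u v \<longleftrightarrow> u \<noteq> v \<and> (\<forall>i<n. u ! i = v ! i \<or> circ_adj d q (u ! i) (v ! i))"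

definition sp_independent :: "nat \<Rightarrow> nat \<Rightarrow> nat \<Rightarrow> int list set \<Rightarrow> bool" where
  "sp_independent d q n S \<longleftrightarrow> S \<subseteq> sp_vertices q n \<and>
     (\<forall>u\<in>S. \<forall>v\<in>S. \<not> sp_adj d q n u v)"

text \<open>Action of (sigma, s, c) in D_q^n semidirect S_n: coordinatewise x \<mapsto> s_i x + c_i
  (s_i = +-1) after permuting coordinates by sigma.\<close>
definition lee_map :: "nat \<Rightarrow> nat \<Rightarrow> (nat \<Rightarrow> nat) \<Rightarrow> (nat \<Rightarrow> int) \<Rightarrow> (nat \<Rightarrow> int)
    \<Rightarrow> int list \<Rightarrow> int list" where
  "lee_map q n \<sigma> s c x = map (\<lambda>i. (s i * x ! (\<sigma> i) + c i) mod int q) [0..<n]"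

definition lee_equiv :: "nat \<Rightarrow> nat \<Rightarrow> int list set \<Rightarrow> int list set \<Rightarrow> bool" where
  "lee_equiv q n C D \<longleftrightarrow> (\<exists>\<sigma> s c. \<sigma> permutes {..<n} \<and> (\<forall>i<n. s i = 1 \<or> s i = -1) \<and>
     lee_map q n \<sigma> s c ` C = D)"

end

theory Submission
  imports Defs
begin

definition nr :: "int \<Rightarrow> int \<Rightarrow> bool" where
  "nr x y \<longleftrightarrow> min \<bar>x - y\<bar> (14 - \<bar>x - y\<bar>) < 5"

lemma circ_adj_nr: "circ_adj 5 14 x y \<longleftrightarrow> x \<noteq> y \<and> nr x y"
  by (simp add: circ_adj_def nr_def)

lemma nr_refl[simp]: "nr x x" by (simp add: nr_def)
lemma nr_sym: "nr x y = nr y x" by (simp add: nr_def abs_minus_commute)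

lemma all_less3: "(\<forall>i<(3::nat). P i) \<longleftrightarrow> P 0 \<and> P 1 \<and> P 2"
  by (auto simp: numeral_3_eq_3 less_Suc_eq numeral_2_eq_2)

lemma sp_adj_iff: "sp_adj 5 14 3 u v \<longleftrightarrow> u \<noteq> v \<and> nr (u!0) (v!0) \<and> nr (u!1) (v!1) \<and> nr (u!2) (v!2)"
  unfolding sp_adj_def all_less3 circ_adj_nr by auto

lemma tri: "0 \<le> x \<Longrightarrow> x < 14 \<Longrightarrow> 0 \<le> y \<Longrightarrow> y < 14 \<Longrightarrow> 0 \<le> z \<Longrightarrow> z < 14 \<Longrightarrow>
   nr x y \<or> nr y z \<or> nr x z"
  unfolding nr_def min_def abs_if by (simp split: if_splits; linarith)

lemma mod14_cases: "0 \<le> (x::int) \<Longrightarrow> x < 28 \<Longrightarrow> x mod 14 = (if x < 14 then x else x - 14)"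
proof (cases "x < 14")
  case False
  assume "x < 28"
  have "x mod 14 = (x - 14) mod 14" using False by (intro mod_pos_geq) auto
  also have "\<dots> = x - 14" using False \<open>x < 28\<close> by (intro mod_pos_pos_trivial) auto
  finally show ?thesis using False by simp
qed simp

lemma mod14_neg: "-14 \<le> (x::int) \<Longrightarrow> x < 0 \<Longrightarrow> x mod 14 = x + 14"
proof -
  assume "-14 \<le> x" "x < 0"
  have "x mod 14 = (x + 14) mod 14" by simp
  also have "\<dots> = x + 14" using \<open>-14 \<le> x\<close> \<open>x < 0\<close> by (intro mod_pos_pos_trivial) auto
  finally show ?thesis .
qed

lemma nr_mod: "0 \<le> a \<Longrightarrow> a < 14 \<Longrightarrow> nr a ((a + s) mod 14) \<longleftrightarrow> (s mod 14 < 5 \<or> s mod 14 \<ge> 10)"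
proof -
  assume a: "0 \<le> a" "a < 14"
  define r where "r = s mod 14"
  have r: "0 \<le> r" "r < 14" unfolding r_def by auto
  have "(a + s) mod 14 = (a + r) mod 14" unfolding r_def by (simp add: mod_add_right_eq)
  also have "\<dots> = (if a + r < 14 then a + r else a + r - 14)"
    using a r by (intro mod14_cases) auto
  finally show ?thesis unfolding nr_def r_def[symmetric] using a r
    unfolding min_def abs_if by (simp split: if_splits; linarith)
qed

lemma nr_diff: "0 \<le> x \<Longrightarrow> x < 14 \<Longrightarrow> 0 \<le> y \<Longrightarrow> y < 14 \<Longrightarrow>
  nr x y \<longleftrightarrow> ((y - x) mod 14 < 5 \<or> (y - x) mod 14 \<ge> 10)"
  using nr_mod[of x "y - x"] by simp

definition inw :: "int \<Rightarrow> int \<Rightarrow> bool" where "inw w x \<longleftrightarrow> (x - w) mod 14 < 5"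

lemma inw_nr: "0 \<le> x \<Longrightarrow> x < 14 \<Longrightarrow> 0 \<le> y \<Longrightarrow> y < 14 \<Longrightarrow> inw w x \<Longrightarrow> inw w y \<Longrightarrow> nr x y"
proof -
  assume r: "0 \<le> x" "x < 14" "0 \<le> y" "y < 14" and w: "inw w x" "inw w y"
  define a where "a = (x - w) mod 14"
  define b where "b = (y - w) mod 14"
  have ab: "0 \<le> a" "a < 5" "0 \<le> b" "b < 5" using w unfolding a_def b_def inw_def by auto
  have "(y - x) mod 14 = ((y - w) - (x - w)) mod 14" by simp
  also have "\<dots> = (b - a) mod 14" unfolding a_def b_def by (simp add: mod_diff_eq)
  finally have e: "(y - x) mod 14 = (b - a) mod 14" .
  show ?thesis
  proof (cases "b - a < 0")
    case True
    then have "(b - a) mod 14 = b - a + 14" using ab by (intro mod14_neg) auto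
    then show ?thesis using nr_diff[OF r] e ab by auto
  next
    case False
    then have "(b - a) mod 14 = b - a" using ab by (intro mod_pos_pos_trivial) auto
    then show ?thesis using nr_diff[OF r] e ab by auto
  qed
qed

lemma cases14: "0 \<le> (t::int) \<Longrightarrow> t < 14 \<Longrightarrow> t = 0 \<or> t = 1 \<or> t = 2 \<or> t = 3 \<or> t = 4 \<or> t = 5 \<or> t = 6 \<or>
   t = 7 \<or> t = 8 \<or> t = 9 \<or> t = 10 \<or> t = 11 \<or> t = 12 \<or> t = 13"
  by (smt (verit))
lemma set14: "{0..<14::int} = {0,1,2,3,4,5,6,7,8,9,10,11,12,13}"
proof (intro set_eqI iffI)
  fix x :: int assume "x \<in> {0..<14}"
  then show "x \<in> {0,1,2,3,4,5,6,7,8,9,10,11,12,13}" using cases14[of x] by simp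
qed auto
lemma sum14: "(\<Sum>w\<in>{0..<14::int}. h w) = h 0 + h 1 + h 2 + h 3 + h 4 + h 5 + h 6 + h 7 + h 8 + h 9 + h 10 + h 11 + h 12 + h 13"
  unfolding set14 by (simp add: algebra_simps)
lemma win_count: assumes "0 \<le> x" "x < 14" shows "(\<Sum>w\<in>{0..<14::int}. if inw w x then 1 else 0) = (5::nat)"
  using cases14[OF assms] by (elim disjE) (simp_all add: sum14 inw_def)

lemma three_elems:
  assumes "finite A" "3 \<le> card A"
  obtains x y z where "x \<in> A" "y \<in> A" "z \<in> A" "x \<noteq> y" "y \<noteq> z" "x \<noteq> z"
proof -
  have "A \<noteq> {}" using assms by auto
  then obtain x where x: "x \<in> A" by blast
  have c1: "card (A - {x}) \<ge> 2" using assms x by (simp add: card_Diff_singleton)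
  then have "A - {x} \<noteq> {}" by (metis card.empty not_numeral_le_zero)
  then obtain y where y: "y \<in> A - {x}" by blast
  have "card (A - {x} - {y}) \<ge> 1" using c1 y assms(1) by (simp add: card_Diff_singleton)
  then have "A - {x} - {y} \<noteq> {}" by (metis card.empty not_one_le_zero)
  then obtain z where z: "z \<in> A - {x} - {y}" by blast
  show ?thesis using x y z by (intro that[of x y z]) auto
qed

lemma le2:
  assumes "finite A" "\<forall>p\<in>A. 0 \<le> b p \<and> b p < 14"
    "\<forall>p\<in>A. \<forall>q\<in>A. p \<noteq> q \<longrightarrow> \<not> nr (b p) (b q)"
  shows "card A \<le> 2"
proof (rule ccontr)
  assume "\<not> card A \<le> 2"
  then have "3 \<le> card A" by simp
  then obtain x y z where in3: "x \<in> A" "y \<in> A" "z \<in> A" and d: "x \<noteq> y" "y \<noteq> z" "x \<noteq> z"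
    using three_elems assms(1) by blast
  have r: "0 \<le> b x" "b x < 14" "0 \<le> b y" "b y < 14" "0 \<le> b z" "b z < 14"
    using assms(2) in3 by auto
  have "nr (b x) (b y) \<or> nr (b y) (b z) \<or> nr (b x) (b z)"
    using tri[OF r] .
  moreover have "\<not> nr (b x) (b y)" "\<not> nr (b y) (b z)" "\<not> nr (b x) (b z)"
    using assms(3) in3 d by auto
  ultimately show False by blast
qed
lemma card_filter_sum: "finite T \<Longrightarrow> card {p\<in>T. P p} = (\<Sum>p\<in>T. if P p then 1 else 0)"
  by (subst card_eq_sum) (simp only: sum.inter_filter)

lemma dc:
  assumes "finite T" "\<forall>p\<in>T. 0 \<le> a p \<and> a p < 14"
  shows "(\<Sum>w\<in>{0..<14::int}. card {p\<in>T. inw w (a p)}) = 5 * card T"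
proof -
  have "(\<Sum>w\<in>{0..<14::int}. card {p\<in>T. inw w (a p)}) =
        (\<Sum>w\<in>{0..<14::int}. \<Sum>p\<in>T. if inw w (a p) then 1 else 0)"
    by (intro sum.cong refl card_filter_sum assms(1))
  also have "\<dots> = (\<Sum>p\<in>T. \<Sum>w\<in>{0..<14::int}. if inw w (a p) then 1 else 0)"
    by (rule sum.swap)
  also have "\<dots> = (\<Sum>p\<in>T. 5)"
  proof (rule sum.cong[OF refl])
    fix p assume "p \<in> T"
    then have "0 \<le> a p" "a p < 14" using assms(2) by auto
    then show "(\<Sum>w\<in>{0..<14::int}. if inw w (a p) then 1 else 0) = (5::nat)" by (rule win_count)
  qed
  also have "\<dots> = 5 * card T" by simp
  finally show ?thesis .
qed

lemma le5:
  assumes "finite T" "\<forall>p\<in>T. 0 \<le> a p \<and> a p < 14 \<and> 0 \<le> b p \<and> b p < 14"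
    "\<forall>p\<in>T. \<forall>q\<in>T. p \<noteq> q \<longrightarrow> \<not> nr (a p) (a q) \<or> \<not> nr (b p) (b q)"
  shows "card T \<le> 5"
proof -
  have w: "card {p\<in>T. inw w (a p)} \<le> 2" for w
  proof (rule le2[where b = b])
    show "finite {p\<in>T. inw w (a p)}" using assms(1) by simp
    show "\<forall>p\<in>{p\<in>T. inw w (a p)}. 0 \<le> b p \<and> b p < 14" using assms(2) by simp
    show "\<forall>p\<in>{p\<in>T. inw w (a p)}. \<forall>q\<in>{p\<in>T. inw w (a p)}. p \<noteq> q \<longrightarrow> \<not> nr (b p) (b q)"
    proof (intro ballI impI)
      fix p q assume pq: "p \<in> {p\<in>T. inw w (a p)}" "q \<in> {p\<in>T. inw w (a p)}" "p \<noteq> q"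
      have "p \<in> T" "q \<in> T" "inw w (a p)" "inw w (a q)" using pq by auto
      then have "nr (a p) (a q)" using assms(2) inw_nr[of "a p" "a q" w] by blast
      then show "\<not> nr (b p) (b q)" using assms(3) \<open>p \<in> T\<close> \<open>q \<in> T\<close> pq(3) by blast
    qed
  qed
  have ra: "\<forall>p\<in>T. 0 \<le> a p \<and> a p < 14" using assms(2) by blast
  have "5 * card T = (\<Sum>w\<in>{0..<14::int}. card {p\<in>T. inw w (a p)})"
    using dc[OF assms(1) ra] by simp
  also have "\<dots> \<le> (\<Sum>w\<in>{0..<14::int}. 2)" by (intro sum_mono w)
  finally show ?thesis by simp
qed

lemma levels:
  assumes fin: "finite S" and card: "card S = 14"
    and rng: "\<forall>p\<in>S. 0 \<le> c p \<and> c p < 14 \<and> 0 \<le> a p \<and> a p < 14 \<and> 0 \<le> b p \<and> b p < 14"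
    and ind: "\<forall>p\<in>S. \<forall>q\<in>S. p \<noteq> q \<longrightarrow> \<not> nr (c p) (c q) \<or> \<not> nr (a p) (a q) \<or> \<not> nr (b p) (b q)"
  shows "0 \<le> y \<Longrightarrow> y < 14 \<Longrightarrow> card {p\<in>S. c p = y} = 1"
proof -
  define W where "W w = card {p\<in>S. inw w (c p)}" for w
  define n where "n y = card {p\<in>S. c p = y}" for y
  have Wle: "W w \<le> 5" for w
    unfolding W_def
  proof (rule le5[where a = a and b = b])
    show "finite {p\<in>S. inw w (c p)}" using fin by simp
    show "\<forall>p\<in>{p\<in>S. inw w (c p)}. 0 \<le> a p \<and> a p < 14 \<and> 0 \<le> b p \<and> b p < 14" using rng by simp
    show "\<forall>p\<in>{p\<in>S. inw w (c p)}. \<forall>q\<in>{p\<in>S. inw w (c p)}. p \<noteq> q \<longrightarrow> \<not> nr (a p) (a q) \<or> \<not> nr (b p) (b q)"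
    proof (intro ballI impI)
      fix p q assume pq: "p \<in> {p\<in>S. inw w (c p)}" "q \<in> {p\<in>S. inw w (c p)}" "p \<noteq> q"
      have "p \<in> S" "q \<in> S" "inw w (c p)" "inw w (c q)" using pq by auto
      then have "nr (c p) (c q)" using rng inw_nr[of "c p" "c q" w] by blast
      then show "\<not> nr (a p) (a q) \<or> \<not> nr (b p) (b q)" using ind \<open>p \<in> S\<close> \<open>q \<in> S\<close> pq(3) by blast
    qed
  qed
  have sumW: "(\<Sum>w\<in>{0..<14::int}. W w) = 70"
  proof -
    have rc: "\<forall>p\<in>S. 0 \<le> c p \<and> c p < 14" using rng by blast
    show ?thesis unfolding W_def using dc[OF fin rc] card by simp
  qed
  have Wn: "W w = (\<Sum>y\<in>{0..<14::int}. if inw w y then n y else 0)" for w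
  proof -
    have "W w = (\<Sum>p\<in>S. if inw w (c p) then 1 else 0)"
      unfolding W_def using fin by (simp add: card_filter_sum)
    also have "\<dots> = (\<Sum>p\<in>S. \<Sum>y\<in>{0..<14::int}. if c p = y then (if inw w y then 1 else 0) else 0)"
    proof (intro sum.cong refl)
      fix p assume "p \<in> S"
      then have "c p \<in> {0..<14}" using rng by auto
      then show "(if inw w (c p) then 1 else 0) =
          (\<Sum>y\<in>{0..<14::int}. if c p = y then (if inw w y then 1 else 0) else (0::nat))"
        by (simp add: sum.delta)
    qed
    also have "\<dots> = (\<Sum>y\<in>{0..<14::int}. \<Sum>p\<in>S. if c p = y then (if inw w y then 1 else 0) else 0)"
      by (rule sum.swap)
    also have "\<dots> = (\<Sum>y\<in>{0..<14::int}. if inw w y then n y else 0)"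
    proof (intro sum.cong refl)
      fix y
      show "(\<Sum>p\<in>S. if c p = y then (if inw w y then 1 else 0) else 0) = (if inw w y then n y else (0::nat))"
        unfolding n_def using fin by (simp add: card_filter_sum)
    qed
    finally show ?thesis .
  qed
  have "(\<Sum>w\<in>{0..<14::int}. 5 - W w) = (\<Sum>w\<in>{0..<14::int}. 5) - (\<Sum>w\<in>{0..<14::int}. W w)"
    using Wle by (intro sum_subtractf_nat) auto
  then have "(\<Sum>w\<in>{0..<14::int}. 5 - W w) = 0" using sumW by simp
  then have z: "\<forall>a\<in>{0..<14::int}. 5 - W a = 0" by simp
  have Weq: "w \<in> {0..<14} \<Longrightarrow> W w = 5" for w using Wle[of w] z by force
  have W0: "W 0 = 5" by (rule Weq) simp
  have W1: "W 1 = 5" by (rule Weq) simp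
  have W2: "W 2 = 5" by (rule Weq) simp
  have W3: "W 3 = 5" by (rule Weq) simp
  have W4: "W 4 = 5" by (rule Weq) simp
  have W5: "W 5 = 5" by (rule Weq) simp
  have W6: "W 6 = 5" by (rule Weq) simp
  have W7: "W 7 = 5" by (rule Weq) simp
  have W8: "W 8 = 5" by (rule Weq) simp
  have W9: "W 9 = 5" by (rule Weq) simp
  have W10: "W 10 = 5" by (rule Weq) simp
  have W11: "W 11 = 5" by (rule Weq) simp
  have W12: "W 12 = 5" by (rule Weq) simp
  have W13: "W 13 = 5" by (rule Weq) simp
  have E0: "n 0 + n 1 + n 2 + n 3 + n 4 = 5"
    using W0 W1 W2 W3 W4 W5 W6 W7 W8 W9 W10 W11 W12 W13 Wn[of 0] unfolding sum14 by (simp add: inw_def ac_simps)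
  have E1: "n 1 + n 2 + n 3 + n 4 + n 5 = 5"
    using W0 W1 W2 W3 W4 W5 W6 W7 W8 W9 W10 W11 W12 W13 Wn[of 1] unfolding sum14 by (simp add: inw_def ac_simps)
  have E2: "n 2 + n 3 + n 4 + n 5 + n 6 = 5"
    using W0 W1 W2 W3 W4 W5 W6 W7 W8 W9 W10 W11 W12 W13 Wn[of 2] unfolding sum14 by (simp add: inw_def ac_simps)
  have E3: "n 3 + n 4 + n 5 + n 6 + n 7 = 5"
    using W0 W1 W2 W3 W4 W5 W6 W7 W8 W9 W10 W11 W12 W13 Wn[of 3] unfolding sum14 by (simp add: inw_def ac_simps)
  have E4: "n 4 + n 5 + n 6 + n 7 + n 8 = 5"
    using W0 W1 W2 W3 W4 W5 W6 W7 W8 W9 W10 W11 W12 W13 Wn[of 4] unfolding sum14 by (simp add: inw_def ac_simps)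
  have E5: "n 5 + n 6 + n 7 + n 8 + n 9 = 5"
    using W0 W1 W2 W3 W4 W5 W6 W7 W8 W9 W10 W11 W12 W13 Wn[of 5] unfolding sum14 by (simp add: inw_def ac_simps)
  have E6: "n 6 + n 7 + n 8 + n 9 + n 10 = 5"
    using W0 W1 W2 W3 W4 W5 W6 W7 W8 W9 W10 W11 W12 W13 Wn[of 6] unfolding sum14 by (simp add: inw_def ac_simps)
  have E7: "n 7 + n 8 + n 9 + n 10 + n 11 = 5"
    using W0 W1 W2 W3 W4 W5 W6 W7 W8 W9 W10 W11 W12 W13 Wn[of 7] unfolding sum14 by (simp add: inw_def ac_simps)
  have E8: "n 8 + n 9 + n 10 + n 11 + n 12 = 5"
    using W0 W1 W2 W3 W4 W5 W6 W7 W8 W9 W10 W11 W12 W13 Wn[of 8] unfolding sum14 by (simp add: inw_def ac_simps)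
  have E9: "n 9 + n 10 + n 11 + n 12 + n 13 = 5"
    using W0 W1 W2 W3 W4 W5 W6 W7 W8 W9 W10 W11 W12 W13 Wn[of 9] unfolding sum14 by (simp add: inw_def ac_simps)
  have E10: "n 10 + n 11 + n 12 + n 13 + n 0 = 5"
    using W0 W1 W2 W3 W4 W5 W6 W7 W8 W9 W10 W11 W12 W13 Wn[of 10] unfolding sum14 by (simp add: inw_def ac_simps)
  have E11: "n 11 + n 12 + n 13 + n 0 + n 1 = 5"
    using W0 W1 W2 W3 W4 W5 W6 W7 W8 W9 W10 W11 W12 W13 Wn[of 11] unfolding sum14 by (simp add: inw_def ac_simps)
  have E12: "n 12 + n 13 + n 0 + n 1 + n 2 = 5"
    using W0 W1 W2 W3 W4 W5 W6 W7 W8 W9 W10 W11 W12 W13 Wn[of 12] unfolding sum14 by (simp add: inw_def ac_simps)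
  have E13: "n 13 + n 0 + n 1 + n 2 + n 3 = 5"
    using W0 W1 W2 W3 W4 W5 W6 W7 W8 W9 W10 W11 W12 W13 Wn[of 13] unfolding sum14 by (simp add: inw_def ac_simps)
  have c0: "n 0 = n 5" using E0 E1 by linarith
  have c1: "n 5 = n 10" using E5 E6 by linarith
  have c2: "n 10 = n 1" using E10 E11 by linarith
  have c3: "n 1 = n 6" using E1 E2 by linarith
  have c4: "n 6 = n 11" using E6 E7 by linarith
  have c5: "n 11 = n 2" using E11 E12 by linarith
  have c6: "n 2 = n 7" using E2 E3 by linarith
  have c7: "n 7 = n 12" using E7 E8 by linarith
  have c8: "n 12 = n 3" using E12 E13 by linarith
  have c9: "n 3 = n 8" using E3 E4 by linarith
  have c10: "n 8 = n 13" using E8 E9 by linarith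
  have c11: "n 13 = n 4" using E13 E0 by linarith
  have c12: "n 4 = n 9" using E4 E5 by linarith
  have c13: "n 9 = n 0" using E9 E10 by linarith
  have z5: "n 5 = n 0" using c0 by linarith
  have z10: "n 10 = n 0" using c0 c1 by linarith
  have z1: "n 1 = n 0" using c0 c1 c2 by linarith
  have z6: "n 6 = n 0" using c0 c1 c2 c3 by linarith
  have z11: "n 11 = n 0" using c0 c1 c2 c3 c4 by linarith
  have z2: "n 2 = n 0" using c0 c1 c2 c3 c4 c5 by linarith
  have z7: "n 7 = n 0" using c0 c1 c2 c3 c4 c5 c6 by linarith
  have z12: "n 12 = n 0" using c0 c1 c2 c3 c4 c5 c6 c7 by linarith
  have z3: "n 3 = n 0" using c0 c1 c2 c3 c4 c5 c6 c7 c8 by linarith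
  have z8: "n 8 = n 0" using c0 c1 c2 c3 c4 c5 c6 c7 c8 c9 by linarith
  have z13: "n 13 = n 0" using c0 c1 c2 c3 c4 c5 c6 c7 c8 c9 c10 by linarith
  have z4: "n 4 = n 0" using c0 c1 c2 c3 c4 c5 c6 c7 c8 c9 c10 c11 by linarith
  have z9: "n 9 = n 0" using c0 c1 c2 c3 c4 c5 c6 c7 c8 c9 c10 c11 c12 by linarith
  have n0: "n 0 = 1" using E0 z1 z2 z3 z4 by linarith
  assume y: "0 \<le> y" "y < 14"
  then show "card {p\<in>S. c p = y}  = 1"
    using cases14[OF y] n0 z1 z2 z3 z4 z5 z6 z7 z8 z9 z10 z11 z12 z13 unfolding n_def[symmetric]
    by (elim disjE) simp_all
qed

definition pt :: "int \<Rightarrow> int \<Rightarrow> int" where "pt t k = (t + k) mod 14"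

lemma pt_diff: "(pt t j - pt t i) mod 14 = (j - i) mod 14"
  unfolding pt_def by (simp add: mod_diff_eq)

lemma pt_rng: "0 \<le> pt t i" "pt t i < 14" unfolding pt_def by auto

lemma pt_nr: "\<bar>i - j\<bar> \<le> 4 \<Longrightarrow> nr (pt t i) (pt t j)"
proof -
  assume h: "\<bar>i - j\<bar> \<le> 4"
  have e: "(pt t j - pt t i) mod 14 = (j - i) mod 14" by (rule pt_diff)
  show ?thesis
  proof (cases "j - i < 0")
    case True
    then have "(j - i) mod 14 = j - i + 14" using h by (intro mod14_neg) auto
    then show ?thesis using nr_diff[OF pt_rng pt_rng] e h by auto
  next
    case False
    then have "(j - i) mod 14 = j - i" using h by (intro mod_pos_pos_trivial) auto
    then show ?thesis using nr_diff[OF pt_rng pt_rng] e h by auto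
  qed
qed

lemma pt_neq: "i \<noteq> j \<Longrightarrow> \<bar>i - j\<bar> \<le> 4 \<Longrightarrow> pt t i \<noteq> pt t j"
proof
  assume h: "i \<noteq> j" "\<bar>i - j\<bar> \<le> 4" and eq: "pt t i = pt t j"
  have e: "(j - i) mod 14 = 0" using pt_diff[of t j i] eq by simp
  show False
  proof (cases "j - i < 0")
    case True
    then have "(j - i) mod 14 = j - i + 14" using h by (intro mod14_neg) auto
    then show ?thesis using e h by auto
  next
    case False
    then have "(j - i) mod 14 = j - i" using h by (intro mod_pos_pos_trivial) auto
    then show ?thesis using e h by auto
  qed
qed

lemma pt0: "0 \<le> t \<Longrightarrow> t < 14 \<Longrightarrow> pt t 0 = t" unfolding pt_def by simp

lemma ptpt: "pt (pt t a) b = pt t (a + b)" unfolding pt_def by (simp add: mod_add_left_eq add.assoc)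

lemma five_prop:
  fixes F G :: "int \<Rightarrow> int \<Rightarrow> bool"
  assumes "\<not> (F a b \<and> G a b)"
    and "\<not> (F a c \<and> G a c)"
    and "\<not> (F a d \<and> G a d)"
    and "\<not> (F a e \<and> G a e)"
    and "\<not> (F b c \<and> G b c)"
    and "\<not> (F b d \<and> G b d)"
    and "\<not> (F b e \<and> G b e)"
    and "\<not> (F c d \<and> G c d)"
    and "\<not> (F c e \<and> G c e)"
    and "\<not> (F d e \<and> G d e)"
    and "F a b \<or> F b c \<or> F a c"
    and "G a b \<or> G b c \<or> G a c"
    and "F a b \<or> F b d \<or> F a d"
    and "G a b \<or> G b d \<or> G a d"
    and "F a b \<or> F b e \<or> F a e"
    and "G a b \<or> G b e \<or> G a e"
    and "F a c \<or> F c d \<or> F a d"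
    and "G a c \<or> G c d \<or> G a d"
    and "F a c \<or> F c e \<or> F a e"
    and "G a c \<or> G c e \<or> G a e"
    and "F a d \<or> F d e \<or> F a e"
    and "G a d \<or> G d e \<or> G a e"
    and "F b c \<or> F c d \<or> F b d"
    and "G b c \<or> G c d \<or> G b d"
    and "F b c \<or> F c e \<or> F b e"
    and "G b c \<or> G c e \<or> G b e"
    and "F b d \<or> F d e \<or> F b e"
    and "G b d \<or> G d e \<or> G b e"
    and "F c d \<or> F d e \<or> F c e"
    and "G c d \<or> G d e \<or> G c e"
  shows "(of_bool (F a b) + of_bool (F a c) + of_bool (F a d) + of_bool (F a e) :: nat) = 2"
  using assms by (cases "F a b"; cases "F a c"; cases "F a d"; cases "F a e") (simp_all, (sat | blast)?)

lemma degw: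
  assumes ind: "\<forall>y z. 0 \<le> y \<and> y < 14 \<and> 0 \<le> z \<and> z < 14 \<and> y \<noteq> z \<longrightarrow> \<not> nr y z \<or> \<not> nr (f y) (f z) \<or> \<not> nr (g y) (g z)"
    and rf: "\<forall>t. 0 \<le> t \<and> t < 14 \<longrightarrow> 0 \<le> f t \<and> f t < 14 \<and> 0 \<le> g t \<and> g t < 14"
    and t: "0 \<le> t" "t < 14"
    and dist: "i0 \<noteq> i1 \<and> i0 \<noteq> i2 \<and> i0 \<noteq> i3 \<and> i0 \<noteq> i4 \<and> i1 \<noteq> i2 \<and> i1 \<noteq> i3 \<and> i1 \<noteq> i4 \<and> i2 \<noteq> i3 \<and> i2 \<noteq> i4 \<and> i3 \<noteq> i4"
    and close: "\<bar>i0 - i1\<bar> \<le> 4 \<and> \<bar>i0 - i2\<bar> \<le> 4 \<and> \<bar>i0 - i3\<bar> \<le> 4 \<and> \<bar>i0 - i4\<bar> \<le> 4 \<and> \<bar>i1 - i2\<bar> \<le> 4 \<and> \<bar>i1 - i3\<bar> \<le> 4 \<and> \<bar>i1 - i4\<bar> \<le> 4 \<and> \<bar>i2 - i3\<bar> \<le> 4 \<and> \<bar>i2 - i4\<bar> \<le> 4 \<and> \<bar>i3 - i4\<bar> \<le> 4"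
  shows "(of_bool (nr (f (pt t i0)) (f (pt t i1))) + of_bool (nr (f (pt t i0)) (f (pt t i2))) + of_bool (nr (f (pt t i0)) (f (pt t i3))) + of_bool (nr (f (pt t i0)) (f (pt t i4))) :: nat) = 2"
proof -
  have pr: "0 \<le> pt t i \<and> pt t i < 14" for i unfolding pt_def by simp
  have D: "\<not> (nr (f (pt t i)) (f (pt t j)) \<and> nr (g (pt t i)) (g (pt t j)))" if "i \<noteq> j" "\<bar>i - j\<bar> \<le> 4" for i j
  proof -
    have "pt t i \<noteq> pt t j" using pt_neq[OF that] .
    moreover have "nr (pt t i) (pt t j)" using pt_nr[OF that(2)] .
    ultimately show ?thesis using ind pr[of i] pr[of j] by blast
  qed
  have T: "nr (h (pt t i)) (h (pt t j)) \<or> nr (h (pt t j)) (h (pt t k)) \<or> nr (h (pt t i)) (h (pt t k))"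
    if "\<forall>s. 0 \<le> s \<and> s < 14 \<longrightarrow> 0 \<le> h s \<and> h s < 14" for h i j k
    using that pr[of i] pr[of j] pr[of k] by (intro tri) auto
  have rf1: "\<forall>s. 0 \<le> s \<and> s < 14 \<longrightarrow> 0 \<le> f s \<and> f s < 14" using rf by blast
  have rg1: "\<forall>s. 0 \<le> s \<and> s < 14 \<longrightarrow> 0 \<le> g s \<and> g s < 14" using rf by blast
  show ?thesis
    apply (rule five_prop[where F = "\<lambda>x y. nr (f x) (f y)" and G = "\<lambda>x y. nr (g x) (g y)"])
    using D[of i0 i1] dist close apply blast
    using D[of i0 i2] dist close apply blast
    using D[of i0 i3] dist close apply blast
    using D[of i0 i4] dist close apply blast
    using D[of i1 i2] dist close apply blast
    using D[of i1 i3] dist close apply blast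
    using D[of i1 i4] dist close apply blast
    using D[of i2 i3] dist close apply blast
    using D[of i2 i4] dist close apply blast
    using D[of i3 i4] dist close apply blast
    using T[OF rf1, of i0 i1 i2] apply blast
    using T[OF rg1, of i0 i1 i2] apply blast
    using T[OF rf1, of i0 i1 i3] apply blast
    using T[OF rg1, of i0 i1 i3] apply blast
    using T[OF rf1, of i0 i1 i4] apply blast
    using T[OF rg1, of i0 i1 i4] apply blast
    using T[OF rf1, of i0 i2 i3] apply blast
    using T[OF rg1, of i0 i2 i3] apply blast
    using T[OF rf1, of i0 i2 i4] apply blast
    using T[OF rg1, of i0 i2 i4] apply blast
    using T[OF rf1, of i0 i3 i4] apply blast
    using T[OF rg1, of i0 i3 i4] apply blast
    using T[OF rf1, of i1 i2 i3] apply blast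
    using T[OF rg1, of i1 i2 i3] apply blast
    using T[OF rf1, of i1 i2 i4] apply blast
    using T[OF rg1, of i1 i2 i4] apply blast
    using T[OF rf1, of i1 i3 i4] apply blast
    using T[OF rg1, of i1 i3 i4] apply blast
    using T[OF rf1, of i2 i3 i4] apply blast
    using T[OF rg1, of i2 i3 i4] apply blast
    done
qed

lemma offsets:
  assumes ind: "\<forall>y z. 0 \<le> y \<and> y < 14 \<and> 0 \<le> z \<and> z < 14 \<and> y \<noteq> z \<longrightarrow> \<not> nr y z \<or> \<not> nr (f y) (f z) \<or> \<not> nr (g y) (g z)"
    and rf: "\<forall>t. 0 \<le> t \<and> t < 14 \<longrightarrow> 0 \<le> f t \<and> f t < 14 \<and> 0 \<le> g t \<and> g t < 14"
  shows "\<exists>\<alpha> \<beta>. \<alpha> \<noteq> \<beta> \<and> (\<forall>t. 0 \<le> t \<and> t < 14 \<longrightarrow> nr (f t) (f (pt t 1)) = \<alpha> \<and>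
     nr (f t) (f (pt t 2)) = \<beta> \<and> nr (f t) (f (pt t 3)) = \<beta> \<and> nr (f t) (f (pt t 4)) = \<alpha>)"
proof -
  define c where "c t k = nr (f t) (f (pt t k))" for t k
  have D0: "(of_bool (c t 1) + of_bool (c t 2) + of_bool (c t 3) + of_bool (c t 4) :: nat) = 2"
    if "0 \<le> t" "t < 14" for t
    using degw[OF ind rf that, of 0 1 2 3 4] pt0[OF that] unfolding c_def by simp
  have D1: "(of_bool (c t (-1)) + of_bool (c t 1) + of_bool (c t 2) + of_bool (c t 3) :: nat) = 2"
    if "0 \<le> t" "t < 14" for t
    using degw[OF ind rf that, of 0 "-1" 1 2 3] pt0[OF that] unfolding c_def by simp
  have D2: "(of_bool (c t (-2)) + of_bool (c t (-1)) + of_bool (c t 1) + of_bool (c t 2) :: nat) = 2"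
    if "0 \<le> t" "t < 14" for t
    using degw[OF ind rf that, of 0 "-2" "-1" 1 2] pt0[OF that] unfolding c_def by simp
  have D3: "(of_bool (c t (-3)) + of_bool (c t (-2)) + of_bool (c t (-1)) + of_bool (c t 1) :: nat) = 2"
    if "0 \<le> t" "t < 14" for t
    using degw[OF ind rf that, of 0 "-3" "-2" "-1" 1] pt0[OF that] unfolding c_def by simp
  have D4: "(of_bool (c t (-4)) + of_bool (c t (-3)) + of_bool (c t (-2)) + of_bool (c t (-1)) :: nat) = 2"
    if "0 \<le> t" "t < 14" for t
    using degw[OF ind rf that, of 0 "-4" "-3" "-2" "-1"] pt0[OF that] unfolding c_def by simp
  have E1: "c t 4 = c t (-1)" if "0 \<le> t" "t < 14" for t
    using D0[OF that] D1[OF that] by (cases "c t 4"; cases "c t (-1)"; simp)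
  have E2: "c t 3 = c t (-2)" if "0 \<le> t" "t < 14" for t
    using D1[OF that] D2[OF that] by (cases "c t 3"; cases "c t (-2)"; simp)
  have E3: "c t 2 = c t (-3)" if "0 \<le> t" "t < 14" for t
    using D2[OF that] D3[OF that] by (cases "c t 2"; cases "c t (-3)"; simp)
  have E4: "c t 1 = c t (-4)" if "0 \<le> t" "t < 14" for t
    using D3[OF that] D4[OF that] by (cases "c t 1"; cases "c t (-4)"; simp)
  have SYM: "c t (-k) = c (pt t (-k)) k" if "0 \<le> t" "t < 14" for t k
    unfolding c_def ptpt using pt0[OF that] nr_sym by simp
  have PA: "c t 1 = c (pt t (-5)) 1" if "0 \<le> t" "t < 14" for t
  proof -
    have "c t 1 = c (pt t (-4)) 4" using E4[OF that] SYM[OF that, of 4] by simp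
    also have "\<dots> = c (pt t (-4)) (-1)" using E1 pt_rng by blast
    also have "\<dots> = c (pt (pt t (-4)) (-1)) 1" using SYM[of "pt t (-4)" 1] pt_rng by simp
    finally show ?thesis by (simp add: ptpt)
  qed
  have PB: "c t 2 = c (pt t (-5)) 2" if "0 \<le> t" "t < 14" for t
  proof -
    have "c t 2 = c (pt t (-3)) 3" using E3[OF that] SYM[OF that, of 3] by simp
    also have "\<dots> = c (pt t (-3)) (-2)" using E2 pt_rng by blast
    also have "\<dots> = c (pt (pt t (-3)) (-2)) 2" using SYM[of "pt t (-3)" 2] pt_rng by simp
    finally show ?thesis by (simp add: ptpt)
  qed
  have A5: "c 5 1 = c 0 1" using PA[of 5] by (simp add: pt_def)
  have A10: "c 10 1 = c 0 1" using PA[of 10] A5 by (simp add: pt_def)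
  have A1: "c 1 1 = c 0 1" using PA[of 1] A10 by (simp add: pt_def)
  have A6: "c 6 1 = c 0 1" using PA[of 6] A1 by (simp add: pt_def)
  have A11: "c 11 1 = c 0 1" using PA[of 11] A6 by (simp add: pt_def)
  have A2: "c 2 1 = c 0 1" using PA[of 2] A11 by (simp add: pt_def)
  have A7: "c 7 1 = c 0 1" using PA[of 7] A2 by (simp add: pt_def)
  have A12: "c 12 1 = c 0 1" using PA[of 12] A7 by (simp add: pt_def)
  have A3: "c 3 1 = c 0 1" using PA[of 3] A12 by (simp add: pt_def)
  have A8: "c 8 1 = c 0 1" using PA[of 8] A3 by (simp add: pt_def)
  have A13: "c 13 1 = c 0 1" using PA[of 13] A8 by (simp add: pt_def)
  have A4: "c 4 1 = c 0 1" using PA[of 4] A13 by (simp add: pt_def)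
  have A9: "c 9 1 = c 0 1" using PA[of 9] A4 by (simp add: pt_def)
  have Aall: "0 \<le> t \<Longrightarrow> t < 14 \<Longrightarrow> c t 1 = c 0 1" for t
    using A5 A10 A1 A6 A11 A2 A7 A12 A3 A8 A13 A4 A9 by (auto dest!: cases14)
  have B5: "c 5 2 = c 0 2" using PB[of 5] by (simp add: pt_def)
  have B10: "c 10 2 = c 0 2" using PB[of 10] B5 by (simp add: pt_def)
  have B1: "c 1 2 = c 0 2" using PB[of 1] B10 by (simp add: pt_def)
  have B6: "c 6 2 = c 0 2" using PB[of 6] B1 by (simp add: pt_def)
  have B11: "c 11 2 = c 0 2" using PB[of 11] B6 by (simp add: pt_def)
  have B2: "c 2 2 = c 0 2" using PB[of 2] B11 by (simp add: pt_def)
  have B7: "c 7 2 = c 0 2" using PB[of 7] B2 by (simp add: pt_def)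
  have B12: "c 12 2 = c 0 2" using PB[of 12] B7 by (simp add: pt_def)
  have B3: "c 3 2 = c 0 2" using PB[of 3] B12 by (simp add: pt_def)
  have B8: "c 8 2 = c 0 2" using PB[of 8] B3 by (simp add: pt_def)
  have B13: "c 13 2 = c 0 2" using PB[of 13] B8 by (simp add: pt_def)
  have B4: "c 4 2 = c 0 2" using PB[of 4] B13 by (simp add: pt_def)
  have B9: "c 9 2 = c 0 2" using PB[of 9] B4 by (simp add: pt_def)
  have Ball: "0 \<le> t \<Longrightarrow> t < 14 \<Longrightarrow> c t 2 = c 0 2" for t
    using B5 B10 B1 B6 B11 B2 B7 B12 B3 B8 B13 B4 B9 by (auto dest!: cases14)
  have Q4: "c t 4 = c 0 1" if "0 \<le> t" "t < 14" for t
    using E1[OF that] SYM[OF that, of 1] Aall[OF pt_rng] by simp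
  have Q3: "c t 3 = c 0 2" if "0 \<le> t" "t < 14" for t
    using E2[OF that] SYM[OF that, of 2] Ball[OF pt_rng] by simp
  have ne: "c 0 1 \<noteq> c 0 2" using D0[of 0] Q3[of 0] Q4[of 0] by (cases "c 0 1"; cases "c 0 2"; simp)
  show ?thesis
    apply (rule exI[of _ "c 0 1"], rule exI[of _ "c 0 2"])
    using ne Aall Ball Q3 Q4 unfolding c_def by blast
qed

definition close :: "int \<Rightarrow> bool" where "close s \<longleftrightarrow> s mod 14 < 5 \<or> s mod 14 \<ge> 10"

lemma nr_close: "0 \<le> a \<Longrightarrow> a < 14 \<Longrightarrow> nr a ((a + s) mod 14) = close s"
  unfolding close_def by (rule nr_mod)

lemma sh1: "(\<Sum>t\<in>{0..<14::int}. F (pt t 1)) = (\<Sum>t\<in>{0..<14::int}. F t)"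
  by (simp add: sum14 pt_def ac_simps)
lemma sh2: "(\<Sum>t\<in>{0..<14::int}. F (pt t 2)) = (\<Sum>t\<in>{0..<14::int}. F t)"
  by (simp add: sum14 pt_def ac_simps)
lemma sh3: "(\<Sum>t\<in>{0..<14::int}. F (pt t 3)) = (\<Sum>t\<in>{0..<14::int}. F t)"
  by (simp add: sum14 pt_def ac_simps)

lemma recon:
  assumes rh: "0 \<le> h 0" "h 0 < 14"
    and st: "\<forall>t. 0 \<le> t \<and> t < 14 \<longrightarrow> h (pt t 1) = (h t + k) mod 14"
  shows "0 \<le> t \<Longrightarrow> t < 14 \<Longrightarrow> h t = (h 0 + k * t) mod 14"
proof -
  have "n < 14 \<Longrightarrow> h (int n) = (h 0 + k * int n) mod 14" for n :: nat
  proof (induction n)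
    case 0 then show ?case using rh by simp
  next
    case (Suc n)
    have p: "pt (int n) 1 = int (Suc n)" unfolding pt_def using Suc.prems by simp
    have "h (int (Suc n)) = (h (int n) + k) mod 14" using st[rule_format, of "int n"] Suc.prems p by simp
    also have "\<dots> = ((h 0 + k * int n) mod 14 + k) mod 14" using Suc by simp
    also have "\<dots> = (h 0 + k * int n + k) mod 14" by (rule mod_add_left_eq)
    also have "\<dots> = (h 0 + k * int (Suc n)) mod 14" by (simp add: algebra_simps)
    finally show ?case .
  qed
  moreover assume t: "0 \<le> t" "t < 14"
  moreover have "t = int (nat t)" "nat t < 14" using t by auto
  ultimately show ?thesis by metis
qed

lemma dvd14:
  assumes st: "\<forall>t. 0 \<le> t \<and> t < 14 \<longrightarrow> h (pt t 1) = (h t + e t) mod 14"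
  shows "(14::int) dvd (\<Sum>t\<in>{0..<14::int}. e t)"
proof -
  define q where "q t = (h t + e t) div 14" for t
  have "e t = h (pt t 1) - h t + 14 * q t" if "0 \<le> t" "t < 14" for t
    using st[rule_format, OF conjI[OF that]] mult_div_mod_eq[of 14 "h t + e t"] unfolding q_def by linarith
  then have "(\<Sum>t\<in>{0..<14::int}. e t) = (\<Sum>t\<in>{0..<14::int}. h (pt t 1) - h t + 14 * q t)"
    by (intro sum.cong refl) auto
  also have "\<dots> = (\<Sum>t\<in>{0..<14::int}. h (pt t 1)) - (\<Sum>t\<in>{0..<14::int}. h t) + 14 * (\<Sum>t\<in>{0..<14::int}. q t)"
    by (simp add: sum.distrib sum_subtractf sum_distrib_left)
  also have "\<dots> = 14 * (\<Sum>t\<in>{0..<14::int}. q t)" using sh1[of h] by simp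
  finally show ?thesis by simp
qed

lemma core3:
  assumes p2: "\<forall>t. 0 \<le> t \<and> t < 14 \<longrightarrow> e t + e (pt t 1) \<ge> 5"
    and p3: "\<forall>t. 0 \<le> t \<and> t < 14 \<longrightarrow> e t + e (pt t 1) + e (pt t 2) \<le> 9"
    and dv: "(14::int) dvd (\<Sum>t\<in>{0..<14::int}. e t)"
  shows "0 \<le> t \<Longrightarrow> t < 14 \<Longrightarrow> e t = 3"
proof -
  define S where "S = (\<Sum>t\<in>{0..<14::int}. e t)"
  have "(\<Sum>t\<in>{0..<14::int}. e t + e (pt t 1)) = 2 * S"
    unfolding S_def sum.distrib sh1[of e] by simp
  moreover have "(\<Sum>t\<in>{0..<14::int}. 5) \<le> (\<Sum>t\<in>{0..<14::int}. e t + e (pt t 1))"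
    using p2 by (intro sum_mono) auto
  ultimately have lo: "70 \<le> 2 * S" by simp
  have T: "(\<Sum>t\<in>{0..<14::int}. e t + e (pt t 1) + e (pt t 2)) = 3 * S"
    unfolding S_def sum.distrib sh1[of e] sh2[of e] by simp
  moreover have "(\<Sum>t\<in>{0..<14::int}. e t + e (pt t 1) + e (pt t 2)) \<le> (\<Sum>t\<in>{0..<14::int}. 9)"
    using p3 by (intro sum_mono) auto
  ultimately have hi: "3 * S \<le> 126" by simp
  obtain Q where Q: "S = 14 * Q" using dv unfolding S_def by (auto elim: dvdE)
  have "Q = 3" using lo hi unfolding Q by arith
  then have S42: "S = 42" using Q by simp
  have "(\<Sum>t\<in>{0..<14::int}. 9 - (e t + e (pt t 1) + e (pt t 2))) = 126 - 3 * S"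
    using T by (simp add: sum_subtractf)
  then have "(\<Sum>t\<in>{0..<14::int}. 9 - (e t + e (pt t 1) + e (pt t 2))) = 0" using S42 by simp
  then have T9: "\<forall>t\<in>{0..<14::int}. 9 - (e t + e (pt t 1) + e (pt t 2)) = 0"
    using p3 by (subst (asm) sum_nonneg_eq_0_iff) auto
  have eS: "e (pt t 3) = e t" if "0 \<le> t" "t < 14" for t
  proof -
    have "9 - (e t + e (pt t 1) + e (pt t 2)) = 0" using T9 that by auto
    moreover have "9 - (e (pt t 1) + e (pt (pt t 1) 1) + e (pt (pt t 1) 2)) = 0"
      using T9 pt_rng[of t 1] by auto
    ultimately show ?thesis by (simp add: ptpt)
  qed
  have e3: "e 3 = e 0" using eS[of 0] by (simp add: pt_def)
  have e6: "e 6 = e 0" using eS[of 3] e3 by (simp add: pt_def)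
  have e9: "e 9 = e 0" using eS[of 6] e6 by (simp add: pt_def)
  have e12: "e 12 = e 0" using eS[of 9] e9 by (simp add: pt_def)
  have e1: "e 1 = e 0" using eS[of 12] e12 by (simp add: pt_def)
  have e4: "e 4 = e 0" using eS[of 1] e1 by (simp add: pt_def)
  have e7: "e 7 = e 0" using eS[of 4] e4 by (simp add: pt_def)
  have e10: "e 10 = e 0" using eS[of 7] e7 by (simp add: pt_def)
  have e13: "e 13 = e 0" using eS[of 10] e10 by (simp add: pt_def)
  have e2: "e 2 = e 0" using eS[of 13] e13 by (simp add: pt_def)
  have e5: "e 5 = e 0" using eS[of 2] e2 by (simp add: pt_def)
  have e8: "e 8 = e 0" using eS[of 5] e5 by (simp add: pt_def)
  have e11: "e 11 = e 0" using eS[of 8] e8 by (simp add: pt_def)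
  have eall: "0 \<le> t \<Longrightarrow> t < 14 \<Longrightarrow> e t = e 0" for t
    using e3 e6 e9 e12 e1 e4 e7 e10 e13 e2 e5 e8 e11 by (auto dest!: cases14)
  have "S = (\<Sum>t\<in>{0..<14::int}. e 0)" unfolding S_def
  proof (rule sum.cong[OF refl])
    fix x assume "x \<in> {0..<14::int}"
    then show "e x = e 0" by (intro eall) auto
  qed
  then have "S = 14 * e 0" by simp
  then have "e 0 = 3" using S42 by simp
  moreover assume "0 \<le> t" "t < 14"
  ultimately show "e t = 3" using eall[of t] by simp
qed

lemma chain1:
  assumes "\<forall>t. 0 \<le> t \<and> t < 14 \<longrightarrow> P (pt t 1) = P t"
  shows "0 \<le> t \<Longrightarrow> t < 14 \<Longrightarrow> P t = P 0"
proof -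
  have c1: "P 1 = P 0" using assms[rule_format, of 0] by (simp add: pt_def)
  have c2: "P 2 = P 0" using assms[rule_format, of 1] c1 by (simp add: pt_def)
  have c3: "P 3 = P 0" using assms[rule_format, of 2] c2 by (simp add: pt_def)
  have c4: "P 4 = P 0" using assms[rule_format, of 3] c3 by (simp add: pt_def)
  have c5: "P 5 = P 0" using assms[rule_format, of 4] c4 by (simp add: pt_def)
  have c6: "P 6 = P 0" using assms[rule_format, of 5] c5 by (simp add: pt_def)
  have c7: "P 7 = P 0" using assms[rule_format, of 6] c6 by (simp add: pt_def)
  have c8: "P 8 = P 0" using assms[rule_format, of 7] c7 by (simp add: pt_def)
  have c9: "P 9 = P 0" using assms[rule_format, of 8] c8 by (simp add: pt_def)
  have c10: "P 10 = P 0" using assms[rule_format, of 9] c9 by (simp add: pt_def)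
  have c11: "P 11 = P 0" using assms[rule_format, of 10] c10 by (simp add: pt_def)
  have c12: "P 12 = P 0" using assms[rule_format, of 11] c11 by (simp add: pt_def)
  have c13: "P 13 = P 0" using assms[rule_format, of 12] c12 by (simp add: pt_def)
  assume "0 \<le> t" "t < 14"
  then show "P t = P 0" using c1 c2 c3 c4 c5 c6 c7 c8 c9 c10 c11 c12 c13 by (auto dest!: cases14)
qed

lemma closeR: "-14 \<le> s \<Longrightarrow> s < 14 \<Longrightarrow> close s \<longleftrightarrow> (-4 \<le> s \<and> s \<le> 4) \<or> s \<ge> 10 \<or> s \<le> -10"
proof -
  assume s: "-14 \<le> s" "s < 14"
  show ?thesis
  proof (cases "s < 0")
    case True
    then have "s mod 14 = s + 14" using s by (intro mod14_neg) auto
    then show ?thesis unfolding close_def using True by auto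
  next
    case False
    then have "s mod 14 = s" using s by (intro mod_pos_pos_trivial) auto
    then show ?thesis unfolding close_def using False by auto
  qed
qed

lemma closeH: "14 \<le> s \<Longrightarrow> s < 42 \<Longrightarrow> close s \<longleftrightarrow> (14 \<le> s \<and> s \<le> 18) \<or> (24 \<le> s \<and> s \<le> 32) \<or> s \<ge> 38"
proof -
  assume s: "14 \<le> s" "s < 42"
  show ?thesis
  proof (cases "s < 28")
    case True
    have "s mod 14 = (s - 14) mod 14" using s by (intro mod_pos_geq) auto
    also have "\<dots> = s - 14" using s True by (intro mod_pos_pos_trivial) auto
    finally show ?thesis unfolding close_def using True by auto
  next
    case False
    have "s mod 14 = (s - 14) mod 14" using s by (intro mod_pos_geq) auto
    also have "\<dots> = (s - 14 - 14) mod 14" using s False by (intro mod_pos_geq) auto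
    also have "\<dots> = (s - 28) mod 14" by simp
    also have "\<dots> = s - 28" using s False by (intro mod_pos_pos_trivial) auto
    finally show ?thesis unfolding close_def using False by auto
  qed
qed

lemma step_sum:
  fixes h e :: "int \<Rightarrow> int"
  assumes rh: "\<forall>t. 0 \<le> t \<and> t < 14 \<longrightarrow> 0 \<le> h t \<and> h t < 14"
    and st1: "\<forall>t. 0 \<le> t \<and> t < 14 \<longrightarrow> h (pt t 1) = (h t + e t) mod 14"
  shows "0 \<le> t \<Longrightarrow> t < 14 \<Longrightarrow> h (pt t 2) = (h t + (e t + e (pt t 1))) mod 14"
    and "0 \<le> t \<Longrightarrow> t < 14 \<Longrightarrow> h (pt t 3) = (h t + (e t + e (pt t 1) + e (pt t 2))) mod 14"
    and "0 \<le> t \<Longrightarrow> t < 14 \<Longrightarrow> h (pt t 4) = (h t + (e t + e (pt t 1) + e (pt t 2) + e (pt t 3))) mod 14"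
proof -
  assume t: "0 \<le> t" "t < 14"
  have a: "h (pt t 2) = (h t + (e t + e (pt t 1))) mod 14"
  proof -
    have "h (pt t 2) = h (pt (pt t 1) 1)" by (simp add: ptpt)
    also have "\<dots> = (h (pt t 1) + e (pt t 1)) mod 14" using st1 pt_rng[of t 1] by auto
    also have "\<dots> = ((h t + e t) mod 14 + e (pt t 1)) mod 14" using st1 t by auto
    also have "\<dots> = (h t + (e t + e (pt t 1))) mod 14" by (simp add: mod_add_left_eq add.assoc)
    finally show ?thesis .
  qed
  have b: "h (pt t 3) = (h t + (e t + e (pt t 1) + e (pt t 2))) mod 14"
  proof -
    have "h (pt t 3) = h (pt (pt t 2) 1)" by (simp add: ptpt)
    also have "\<dots> = (h (pt t 2) + e (pt t 2)) mod 14" using st1 pt_rng[of t 2] by auto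
    also have "\<dots> = ((h t + (e t + e (pt t 1))) mod 14 + e (pt t 2)) mod 14" using a by simp
    also have "\<dots> = (h t + (e t + e (pt t 1) + e (pt t 2))) mod 14" by (simp add: mod_add_left_eq add.assoc)
    finally show ?thesis .
  qed
  have c: "h (pt t 4) = (h t + (e t + e (pt t 1) + e (pt t 2) + e (pt t 3))) mod 14"
  proof -
    have "h (pt t 4) = h (pt (pt t 3) 1)" by (simp add: ptpt)
    also have "\<dots> = (h (pt t 3) + e (pt t 3)) mod 14" using st1 pt_rng[of t 3] by auto
    also have "\<dots> = ((h t + (e t + e (pt t 1) + e (pt t 2))) mod 14 + e (pt t 3)) mod 14" using b by simp
    also have "\<dots> = (h t + (e t + e (pt t 1) + e (pt t 2) + e (pt t 3))) mod 14" by (simp add: mod_add_left_eq add.assoc)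
    finally show ?thesis .
  qed
  show "h (pt t 2) = (h t + (e t + e (pt t 1))) mod 14" by (rule a)
  show "h (pt t 3) = (h t + (e t + e (pt t 1) + e (pt t 2))) mod 14" by (rule b)
  show "h (pt t 4) = (h t + (e t + e (pt t 1) + e (pt t 2) + e (pt t 3))) mod 14" by (rule c)
qed

lemma rep_step:
  fixes x y e :: int
  assumes rh: "0 \<le> x" "x < 14" "0 \<le> y" "y < 14" and e: "e mod 14 = (y - x) mod 14"
  shows "y = (x + e) mod 14"
proof -
  have "(x + e) mod 14 = (x + e mod 14) mod 14" by (simp add: mod_add_right_eq)
  also have "\<dots> = (x + (y - x) mod 14) mod 14" using e by simp
  also have "\<dots> = (x + (y - x)) mod 14" by (simp add: mod_add_right_eq)
  also have "\<dots> = y" using rh by simp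
  finally show ?thesis by simp
qed

lemma core9:
  assumes r: "\<forall>t. 0 \<le> t \<and> t < 14 \<longrightarrow> 5 \<le> d t \<and> d t \<le> 9"
    and p4: "\<forall>t. 0 \<le> t \<and> t < 14 \<longrightarrow> d t + d (pt t 1) + d (pt t 2) + d (pt t 3) \<le> 23 \<or>
                d t + d (pt t 1) + d (pt t 2) + d (pt t 3) \<ge> 33"
    and dv: "(14::int) dvd (\<Sum>t\<in>{0..<14::int}. d t)"
  shows "(\<forall>t. 0 \<le> t \<and> t < 14 \<longrightarrow> d t = 5) \<or> (\<forall>t. 0 \<le> t \<and> t < 14 \<longrightarrow> d t = 9)"
proof -
  define D where "D t = d t + d (pt t 1) + d (pt t 2) + d (pt t 3)" for t
  define S where "S = (\<Sum>t\<in>{0..<14::int}. d t)"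
  have DS: "(\<Sum>t\<in>{0..<14::int}. D t) = 4 * S"
    unfolding D_def S_def sum.distrib sh1[of d] sh2[of d] sh3[of d] by simp
  have Spos: "70 \<le> S" "S \<le> 126"
  proof -
    have "(\<Sum>t\<in>{0..<14::int}. 5) \<le> S" unfolding S_def using r by (intro sum_mono) auto
    then show "70 \<le> S" by simp
    have "S \<le> (\<Sum>t\<in>{0..<14::int}. 9)" unfolding S_def using r by (intro sum_mono) auto
    then show "S \<le> 126" by simp
  qed
  obtain Q where Q: "S = 14 * Q" using dv unfolding S_def by (auto elim: dvdE)
  have sg: "(D (pt t 1) \<le> 23) = (D t \<le> 23)" if "0 \<le> t" "t < 14" for t
  proof -
    have e: "D (pt t 1) = D t - d t + d (pt t 4)" unfolding D_def by (simp add: ptpt)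
    have "5 \<le> d t" "d t \<le> 9" using r that by auto
    moreover have "5 \<le> d (pt t 4)" "d (pt t 4) \<le> 9" using r pt_rng[of t 4] by auto
    moreover have "D t \<le> 23 \<or> D t \<ge> 33" using p4 that unfolding D_def by auto
    moreover have "D (pt t 1) \<le> 23 \<or> D (pt t 1) \<ge> 33" using p4 pt_rng[of t 1] unfolding D_def by auto
    ultimately show ?thesis using e by linarith
  qed
  have L: "(D t \<le> 23) = (D 0 \<le> 23)" if "0 \<le> t" "t < 14" for t
    using chain1[of "\<lambda>t. D t \<le> 23", OF _ that] sg by blast
  show ?thesis
  proof (cases "D 0 \<le> 23")
    case True
    then have all: "D t \<le> 23" if "0 \<le> t" "t < 14" for t using L[OF that] by simp
    have "4 * S \<le> (\<Sum>t\<in>{0..<14::int}. 23)" unfolding DS[symmetric] using all by (intro sum_mono) auto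
    then have "4 * S \<le> 322" by simp
    then have "Q = 5" using Spos unfolding Q by arith
    then have S70: "S = 70" using Q by simp
    have "(\<Sum>t\<in>{0..<14::int}. d t - 5) = S - 70" unfolding S_def by (simp add: sum_subtractf)
    then have "(\<Sum>t\<in>{0..<14::int}. d t - 5) = 0" using S70 by simp
    then have "\<forall>t\<in>{0..<14::int}. d t - 5 = 0" using r by (subst (asm) sum_nonneg_eq_0_iff) auto
    then show ?thesis by auto
  next
    case False
    then have all: "D t \<ge> 33" if "0 \<le> t" "t < 14" for t
      using L[OF that] p4 that unfolding D_def by auto
    have "(\<Sum>t\<in>{0..<14::int}. 33) \<le> 4 * S" unfolding DS[symmetric] using all by (intro sum_mono) auto
    then have "462 \<le> 4 * S" by simp
    then have "Q = 9" using Spos unfolding Q by arith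
    then have S126: "S = 126" using Q by simp
    have "(\<Sum>t\<in>{0..<14::int}. 9 - d t) = 126 - S" unfolding S_def by (simp add: sum_subtractf)
    then have "(\<Sum>t\<in>{0..<14::int}. 9 - d t) = 0" using S126 by simp
    then have "\<forall>t\<in>{0..<14::int}. 9 - d t = 0" using r by (subst (asm) sum_nonneg_eq_0_iff) auto
    then show ?thesis by auto
  qed
qed

lemma L3:
  assumes rh: "\<forall>t. 0 \<le> t \<and> t < 14 \<longrightarrow> 0 \<le> h t \<and> h t < 14"
    and n1: "\<forall>t. 0 \<le> t \<and> t < 14 \<longrightarrow> nr (h t) (h (pt t 1))"
    and f2: "\<forall>t. 0 \<le> t \<and> t < 14 \<longrightarrow> \<not> nr (h t) (h (pt t 2))"
    and f3: "\<forall>t. 0 \<le> t \<and> t < 14 \<longrightarrow> \<not> nr (h t) (h (pt t 3))"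
  shows "(\<forall>t. 0 \<le> t \<and> t < 14 \<longrightarrow> h t = (h 0 + 3 * t) mod 14) \<or>
         (\<forall>t. 0 \<le> t \<and> t < 14 \<longrightarrow> h t = (h 0 + (-3) * t) mod 14)"
proof -
  define m where "m t = (h (pt t 1) - h t) mod 14" for t
  define e where "e t = (if m t \<le> 7 then m t else m t - 14)" for t
  have mr: "0 \<le> m t" "m t < 14" for t unfolding m_def by auto
  have er: "-6 \<le> e t" "e t \<le> 7" for t unfolding e_def using mr[of t] by auto
  have emod: "e t mod 14 = (h (pt t 1) - h t) mod 14" for t
  proof (cases "m t \<le> 7")
    case True then show ?thesis unfolding e_def m_def[symmetric] using mr[of t] by simp
  next
    case False
    have "(m t - 14) mod 14 = m t mod 14" by (simp add: mod_diff_right_eq[symmetric])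
    then show ?thesis unfolding e_def m_def[symmetric] using False mr[of t] by simp
  qed
  have st1: "\<forall>t. 0 \<le> t \<and> t < 14 \<longrightarrow> h (pt t 1) = (h t + e t) mod 14"
  proof (intro allI impI)
    fix t :: int assume t: "0 \<le> t \<and> t < 14"
    have "0 \<le> h (pt t 1) \<and> h (pt t 1) < 14" using rh pt_rng[of t 1] by blast
    then show "h (pt t 1) = (h t + e t) mod 14" using rh t emod[of t] by (intro rep_step) auto
  qed
  have hr: "0 \<le> h t" "h t < 14" if "0 \<le> t" "t < 14" for t using rh that by auto
  have c1: "-4 \<le> e t \<and> e t \<le> 4" if t: "0 \<le> t" "t < 14" for t
  proof -
    have "close (e t)" using n1 t st1 nr_close[OF hr[OF t]] by auto
    then show ?thesis using closeR[of "e t"] er[of t] by auto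
  qed
  have c2: "e t + e (pt t 1) \<ge> 5 \<or> e t + e (pt t 1) \<le> -5" if t: "0 \<le> t" "t < 14" for t
  proof -
    have "\<not> close (e t + e (pt t 1))" using f2 t step_sum(1)[OF rh st1 t] nr_close[OF hr[OF t]] by auto
    moreover have "-4 \<le> e (pt t 1) \<and> e (pt t 1) \<le> 4" using c1 pt_rng by auto
    ultimately show ?thesis using closeR[of "e t + e (pt t 1)"] c1[OF t] by auto
  qed
  have c3: "(5 \<le> e t + e (pt t 1) + e (pt t 2) \<and> e t + e (pt t 1) + e (pt t 2) \<le> 9) \<or>
            (-9 \<le> e t + e (pt t 1) + e (pt t 2) \<and> e t + e (pt t 1) + e (pt t 2) \<le> -5)"
    if t: "0 \<le> t" "t < 14" for t
  proof -
    have "\<not> close (e t + e (pt t 1) + e (pt t 2))" using f3 t step_sum(2)[OF rh st1 t] nr_close[OF hr[OF t]] by auto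
    moreover have "-4 \<le> e (pt t 1) \<and> e (pt t 1) \<le> 4" using c1 pt_rng by auto
    moreover have "-4 \<le> e (pt t 2) \<and> e (pt t 2) \<le> 4" using c1 pt_rng by auto
    ultimately show ?thesis using closeR[of "e t + e (pt t 1) + e (pt t 2)"] c1[OF t] by auto
  qed
  have sg: "(0 < e (pt t 1)) = (0 < e t)" if t: "0 \<le> t" "t < 14" for t
  proof -
    have "-4 \<le> e (pt t 1) \<and> e (pt t 1) \<le> 4" using c1 pt_rng by auto
    with c2[OF t] c1[OF t] show ?thesis by auto
  qed
  have L: "(0 < e t) = (0 < e 0)" if "0 \<le> t" "t < 14" for t
    using chain1[of "\<lambda>t. 0 < e t", OF _ that] sg by blast
  have dv: "(14::int) dvd (\<Sum>t\<in>{0..<14::int}. e t)" using dvd14[OF st1] .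
  show ?thesis
  proof (cases "0 < e 0")
    case True
    then have pos: "0 < e t" if "0 \<le> t" "t < 14" for t using L[OF that] by simp
    have "e t = 3" if "0 \<le> t" "t < 14" for t
    proof (rule core3[OF _ _ dv that])
      show "\<forall>t. 0 \<le> t \<and> t < 14 \<longrightarrow> 5 \<le> e t + e (pt t 1)"
      proof (intro allI impI)
        fix t :: int assume t: "0 \<le> t \<and> t < 14"
        then have "0 < e t" "0 < e (pt t 1)" using pos pt_rng[of t 1] by auto
        with c2[of t] t show "5 \<le> e t + e (pt t 1)" by auto
      qed
      show "\<forall>t. 0 \<le> t \<and> t < 14 \<longrightarrow> e t + e (pt t 1) + e (pt t 2) \<le> 9"
      proof (intro allI impI)
        fix t :: int assume t: "0 \<le> t \<and> t < 14"
        then have "0 < e t" "0 < e (pt t 1)" "0 < e (pt t 2)" using pos pt_rng[of t 1] pt_rng[of t 2] by auto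
        with c3[of t] t show "e t + e (pt t 1) + e (pt t 2) \<le> 9" by auto
      qed
    qed
    then have "\<forall>t. 0 \<le> t \<and> t < 14 \<longrightarrow> h (pt t 1) = (h t + 3) mod 14" using st1 by auto
    then have st: "\<forall>t. 0 \<le> t \<and> t < 14 \<longrightarrow> h (pt t 1) = (h t + 3) mod 14" .
    have "\<forall>t. 0 \<le> t \<and> t < 14 \<longrightarrow> h t = (h 0 + 3 * t) mod 14"
    proof (intro allI impI)
      fix t :: int assume "0 \<le> t \<and> t < 14"
      then show "h t = (h 0 + 3 * t) mod 14" by (intro recon[of h, OF hr[of 0, simplified] st]) auto
    qed
    then show ?thesis by (rule disjI1)
  next
    case False
    then have neg: "e t \<le> 0" if "0 \<le> t" "t < 14" for t using L[OF that] by simp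
    have dv': "(14::int) dvd (\<Sum>t\<in>{0..<14::int}. - e t)" using dv by (simp add: sum_negf)
    have "- e t = 3" if "0 \<le> t" "t < 14" for t
    proof (rule core3[OF _ _ dv' that])
      show "\<forall>t. 0 \<le> t \<and> t < 14 \<longrightarrow> 5 \<le> - e t + - e (pt t 1)"
      proof (intro allI impI)
        fix t :: int assume t: "0 \<le> t \<and> t < 14"
        then have "e t \<le> 0" "e (pt t 1) \<le> 0" using neg pt_rng[of t 1] by auto
        with c2[of t] t show "5 \<le> - e t + - e (pt t 1)" by auto
      qed
      show "\<forall>t. 0 \<le> t \<and> t < 14 \<longrightarrow> - e t + - e (pt t 1) + - e (pt t 2) \<le> 9"
      proof (intro allI impI)
        fix t :: int assume t: "0 \<le> t \<and> t < 14"
        then have "e t \<le> 0" "e (pt t 1) \<le> 0" "e (pt t 2) \<le> 0" using neg pt_rng[of t 1] pt_rng[of t 2] by auto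
        with c3[of t] t show "- e t + - e (pt t 1) + - e (pt t 2) \<le> 9" by auto
      qed
    qed
    then have "\<forall>t. 0 \<le> t \<and> t < 14 \<longrightarrow> h (pt t 1) = (h t + (-3)) mod 14"
    proof (intro allI impI)
      fix t :: int assume t: "0 \<le> t \<and> t < 14"
      then have "e t = -3" using \<open>\<And>t. 0 \<le> t \<Longrightarrow> t < 14 \<Longrightarrow> - e t = 3\<close> by force
      then show "h (pt t 1) = (h t + (-3)) mod 14" using st1 t by auto
    qed
    then have st: "\<forall>t. 0 \<le> t \<and> t < 14 \<longrightarrow> h (pt t 1) = (h t + (-3)) mod 14" .
    have "\<forall>t. 0 \<le> t \<and> t < 14 \<longrightarrow> h t = (h 0 + (-3) * t) mod 14"
    proof (intro allI impI)
      fix t :: int assume "0 \<le> t \<and> t < 14"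
      then show "h t = (h 0 + (-3) * t) mod 14" by (intro recon[of h, OF hr[of 0, simplified] st]) auto
    qed
    then show ?thesis by (rule disjI2)
  qed
qed

lemma L9:
  assumes rh: "\<forall>t. 0 \<le> t \<and> t < 14 \<longrightarrow> 0 \<le> h t \<and> h t < 14"
    and f1: "\<forall>t. 0 \<le> t \<and> t < 14 \<longrightarrow> \<not> nr (h t) (h (pt t 1))"
    and f4: "\<forall>t. 0 \<le> t \<and> t < 14 \<longrightarrow> \<not> nr (h t) (h (pt t 4))"
  shows "(\<forall>t. 0 \<le> t \<and> t < 14 \<longrightarrow> h t = (h 0 + 5 * t) mod 14) \<or>
         (\<forall>t. 0 \<le> t \<and> t < 14 \<longrightarrow> h t = (h 0 + 9 * t) mod 14)"
proof -
  define d where "d t = (h (pt t 1) - h t) mod 14" for t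
  have dr: "0 \<le> d t" "d t < 14" for t unfolding d_def by auto
  have st1: "\<forall>t. 0 \<le> t \<and> t < 14 \<longrightarrow> h (pt t 1) = (h t + d t) mod 14"
  proof (intro allI impI)
    fix t :: int assume t: "0 \<le> t \<and> t < 14"
    have "0 \<le> h (pt t 1) \<and> h (pt t 1) < 14" using rh pt_rng[of t 1] by blast
    moreover have "d t mod 14 = (h (pt t 1) - h t) mod 14" unfolding d_def by simp
    ultimately show "h (pt t 1) = (h t + d t) mod 14" using rh t by (intro rep_step) auto
  qed
  have hr: "0 \<le> h t" "h t < 14" if "0 \<le> t" "t < 14" for t using rh that by auto
  have c1: "5 \<le> d t \<and> d t \<le> 9" if t: "0 \<le> t" "t < 14" for t
  proof -
    have "\<not> close (d t)" using f1 t st1 nr_close[OF hr[OF t]] by auto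
    then show ?thesis using closeR[of "d t"] dr[of t] by auto
  qed
  have c4: "d t + d (pt t 1) + d (pt t 2) + d (pt t 3) \<le> 23 \<or> d t + d (pt t 1) + d (pt t 2) + d (pt t 3) \<ge> 33"
    if t: "0 \<le> t" "t < 14" for t
  proof -
    have "\<not> close (d t + d (pt t 1) + d (pt t 2) + d (pt t 3))"
      using f4 t step_sum(3)[OF rh st1 t] nr_close[OF hr[OF t]] by auto
    moreover have "5 \<le> d (pt t 1) \<and> d (pt t 1) \<le> 9" using c1 pt_rng by auto
    moreover have "5 \<le> d (pt t 2) \<and> d (pt t 2) \<le> 9" using c1 pt_rng by auto
    moreover have "5 \<le> d (pt t 3) \<and> d (pt t 3) \<le> 9" using c1 pt_rng by auto
    ultimately show ?thesis using closeH[of "d t + d (pt t 1) + d (pt t 2) + d (pt t 3)"] c1[OF t] by auto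
  qed
  have dv: "(14::int) dvd (\<Sum>t\<in>{0..<14::int}. d t)" using dvd14[OF st1] .
  have "(\<forall>t. 0 \<le> t \<and> t < 14 \<longrightarrow> d t = 5) \<or> (\<forall>t. 0 \<le> t \<and> t < 14 \<longrightarrow> d t = 9)"
    using core9[OF _ _ dv] c1 c4 by blast
  then show ?thesis
  proof
    assume "\<forall>t. 0 \<le> t \<and> t < 14 \<longrightarrow> d t = 5"
    then have "\<forall>t. 0 \<le> t \<and> t < 14 \<longrightarrow> h (pt t 1) = (h t + 5) mod 14" using st1 by auto
    then have st: "\<forall>t. 0 \<le> t \<and> t < 14 \<longrightarrow> h (pt t 1) = (h t + 5) mod 14" .
    have "\<forall>t. 0 \<le> t \<and> t < 14 \<longrightarrow> h t = (h 0 + 5 * t) mod 14"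
    proof (intro allI impI)
      fix t :: int assume "0 \<le> t \<and> t < 14"
      then show "h t = (h 0 + 5 * t) mod 14" by (intro recon[of h, OF hr[of 0, simplified] st]) auto
    qed
    then show ?thesis by (rule disjI1)
  next
    assume "\<forall>t. 0 \<le> t \<and> t < 14 \<longrightarrow> d t = 9"
    then have "\<forall>t. 0 \<le> t \<and> t < 14 \<longrightarrow> h (pt t 1) = (h t + 9) mod 14" using st1 by auto
    then have st: "\<forall>t. 0 \<le> t \<and> t < 14 \<longrightarrow> h (pt t 1) = (h t + 9) mod 14" .
    have "\<forall>t. 0 \<le> t \<and> t < 14 \<longrightarrow> h t = (h 0 + 9 * t) mod 14"
    proof (intro allI impI)
      fix t :: int assume "0 \<le> t \<and> t < 14"
      then show "h t = (h 0 + 9 * t) mod 14" by (intro recon[of h, OF hr[of 0, simplified] st]) auto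
    qed
    then show ?thesis by (rule disjI2)
  qed
qed

lemma list3: "length xs = 3 \<Longrightarrow> xs = [xs!0, xs!1, xs!2]"
proof -
  assume "length xs = 3"
  then obtain a b c where "xs = [a, b, c]" by (auto simp: numeral_3_eq_3 length_Suc_conv)
  then show ?thesis by simp
qed

lemma struct14:
  assumes ind: "sp_independent 5 14 3 S" and card: "card S = 14"
  obtains f g where "\<forall>t. 0 \<le> t \<and> t < 14 \<longrightarrow> 0 \<le> f t \<and> f t < 14 \<and> 0 \<le> g t \<and> g t < 14"
    "S = (\<lambda>t. [t, f t, g t]) ` {0..<14}"
    "\<forall>y z. 0 \<le> y \<and> y < 14 \<and> 0 \<le> z \<and> z < 14 \<and> y \<noteq> z \<longrightarrow> \<not> nr y z \<or> \<not> nr (f y) (f z) \<or> \<not> nr (g y) (g z)"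
proof -
  have fin: "finite S" using card by (intro card_ge_0_finite) simp
  have vs: "S \<subseteq> sp_vertices 14 3" using ind unfolding sp_independent_def by blast
  have len: "length p = 3" if "p \<in> S" for p using vs that unfolding sp_vertices_def by auto
  have rng: "0 \<le> p!i \<and> p!i < 14" if "p \<in> S" "i < 3" for p i
  proof -
    have "p!i \<in> set p" using len[OF that(1)] that(2) by simp
    moreover have "set p \<subseteq> {0..<14}" using vs that(1) unfolding sp_vertices_def by auto
    ultimately show ?thesis by auto
  qed
  have indp: "\<forall>p\<in>S. \<forall>q\<in>S. p \<noteq> q \<longrightarrow> \<not> nr (p!0) (q!0) \<or> \<not> nr (p!1) (q!1) \<or> \<not> nr (p!2) (q!2)"
    using ind unfolding sp_independent_def sp_adj_iff by blast
  have rng3: "\<forall>p\<in>S. 0 \<le> p!0 \<and> p!0 < 14 \<and> 0 \<le> p!1 \<and> p!1 < 14 \<and> 0 \<le> p!2 \<and> p!2 < 14"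
    using rng by auto
  have lv: "card {p\<in>S. p!0 = y} = 1" if "0 \<le> y" "y < 14" for y
    using levels[where c = "\<lambda>p. p!0" and a = "\<lambda>p. p!1" and b = "\<lambda>p. p!2", OF fin card rng3 indp that] .
  have ex1: "\<exists>!p. p \<in> S \<and> p!0 = y" if y: "0 \<le> y" "y < 14" for y
  proof -
    obtain x where x: "{p\<in>S. p!0 = y} = {x}" using lv[OF y] by (rule card_1_singletonE)
    show ?thesis
    proof (rule ex1I[of _ x])
      show "x \<in> S \<and> x!0 = y" using x by auto
      show "\<And>p. p \<in> S \<and> p!0 = y \<Longrightarrow> p = x" using x by auto
    qed
  qed
  define P where "P y = (THE p. p \<in> S \<and> p!0 = y)" for y
  have PS: "P y \<in> S \<and> P y ! 0 = y" if "0 \<le> y" "y < 14" for y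
    unfolding P_def using theI'[OF ex1[OF that]] .
  have Puniq: "p = P y" if "p \<in> S" "p!0 = y" "0 \<le> y" "y < 14" for p y
    unfolding P_def using the1_equality[OF ex1[OF that(3,4)]] that(1,2) by auto
  define f where "f y = P y ! 1" for y
  define g where "g y = P y ! 2" for y
  have Peq: "P y = [y, f y, g y]" if "0 \<le> y" "y < 14" for y
    using list3[OF len[OF conjunct1[OF PS[OF that]]]] PS[OF that] unfolding f_def g_def by simp
  show ?thesis
  proof (rule that)
    show "\<forall>t. 0 \<le> t \<and> t < 14 \<longrightarrow> 0 \<le> f t \<and> f t < 14 \<and> 0 \<le> g t \<and> g t < 14"
      unfolding f_def g_def using PS rng by auto
    show "S = (\<lambda>t. [t, f t, g t]) ` {0..<14}"
    proof
      show "S \<subseteq> (\<lambda>t. [t, f t, g t]) ` {0..<14}"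
      proof
        fix p assume p: "p \<in> S"
        then have y: "0 \<le> p!0" "p!0 < 14" using rng[OF p, of 0] by auto
        then have "p = P (p!0)" using Puniq[OF p refl] by simp
        then have "p = [p!0, f (p!0), g (p!0)]" using Peq[OF y] by simp
        then show "p \<in> (\<lambda>t. [t, f t, g t]) ` {0..<14}" using y by (intro image_eqI[of _ _ "p!0"]) auto
      qed
      show "(\<lambda>t. [t, f t, g t]) ` {0..<14} \<subseteq> S"
        using PS Peq by (auto simp del: list.inject)
    qed
    show "\<forall>y z. 0 \<le> y \<and> y < 14 \<and> 0 \<le> z \<and> z < 14 \<and> y \<noteq> z \<longrightarrow> \<not> nr y z \<or> \<not> nr (f y) (f z) \<or> \<not> nr (g y) (g z)"
    proof (intro allI impI)
      fix y z :: int assume h: "0 \<le> y \<and> y < 14 \<and> 0 \<le> z \<and> z < 14 \<and> y \<noteq> z"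
      then have "P y \<noteq> P z" using PS by metis
      moreover have "P y \<in> S" "P z \<in> S" using PS h by auto
      ultimately show "\<not> nr y z \<or> \<not> nr (f y) (f z) \<or> \<not> nr (g y) (g z)"
        using indp PS h unfolding f_def g_def by metis
    qed
  qed
qed

lemma lee3: "lee_map 14 3 \<sigma> s c x = [(s 0 * x ! \<sigma> 0 + c 0) mod 14, (s 1 * x ! \<sigma> 1 + c 1) mod 14, (s 2 * x ! \<sigma> 2 + c 2) mod 14]"
  by (simp add: lee_map_def upt_rec numeral_2_eq_2)

lemma linmap:
  fixes s x0 a k t m :: int
  assumes ea: "s * a = k + 14 * m"
  shows "(s * ((x0 + a * t) mod 14) + - s * x0) mod 14 = (k * t) mod 14"
proof -
  define q where "q = (x0 + a * t) div 14"
  have r: "(x0 + a * t) mod 14 = x0 + a * t - 14 * q"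
    using mult_div_mod_eq[of 14 "x0 + a * t"] unfolding q_def by linarith
  have "s * ((x0 + a * t) mod 14) + - s * x0 = k * t + 14 * (m * t - s * q)"
    unfolding r using ea by algebra
  then show ?thesis by (simp only: mod_mult_self2)
qed

definition Cset :: "int list set" where
  "Cset = {map (\<lambda>a. (t * a) mod 14) [1, 3, 9] | t. t \<in> {0..<14::int}}"

lemma Cimg: "Cset = (\<lambda>t. [t, (3*t) mod 14, (9*t) mod 14]) ` {0..<14}"
proof -
  have "Cset = (\<lambda>t. map (\<lambda>a. (t * a) mod 14) [1, 3, 9]) ` {0..<14::int}" unfolding Cset_def by blast
  also have "\<dots> = (\<lambda>t. [t, (3*t) mod 14, (9*t) mod 14]) ` {0..<14}"
    by (intro image_cong refl) (auto simp: mult.commute)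
  finally show ?thesis .
qed

lemma finish:
  assumes sp: "\<sigma> permutes {..<3}" and sv: "\<forall>i<3. s i = 1 \<or> s i = -1"
    and Seq: "S = (\<lambda>t. [t, f t, g t]) ` {0..<14}"
    and m: "\<forall>t. 0 \<le> t \<and> t < 14 \<longrightarrow> lee_map 14 3 \<sigma> s c [t, f t, g t] = [t, (3*t) mod 14, (9*t) mod 14]"
  shows "lee_equiv 14 3 S Cset"
  unfolding lee_equiv_def
proof (intro exI conjI)
  show "\<sigma> permutes {..<3}" by (rule sp)
  show "\<forall>i<3. s i = 1 \<or> s i = -1" by (rule sv)
  have "lee_map 14 3 \<sigma> s c ` S = (\<lambda>t. lee_map 14 3 \<sigma> s c [t, f t, g t]) ` {0..<14}"
    unfolding Seq by (simp add: image_image)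
  also have "\<dots> = (\<lambda>t. [t, (3*t) mod 14, (9*t) mod 14]) ` {0..<14}"
    using m by (intro image_cong refl) auto
  finally show "lee_map 14 3 \<sigma> s c ` S = Cset" unfolding Cimg .
qed

lemma finA:
  assumes Seq: "S = (\<lambda>t. [t, f t, g t]) ` {0..<14}"
    and hf: "\<forall>t. 0 \<le> t \<and> t < 14 \<longrightarrow> f t = (f 0 + a * t) mod 14"
    and hg: "\<forall>t. 0 \<le> t \<and> t < 14 \<longrightarrow> g t = (g 0 + b * t) mod 14"
    and sa: "sa = 1 \<or> sa = -1" and sb: "sb = 1 \<or> sb = -1"
    and ea: "sa * a = 3 + 14 * ma" and eb: "sb * b = 9 + 14 * mb"
  shows "lee_equiv 14 3 S Cset"
proof (rule finish[OF permutes_id _ Seq])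
  let ?s = "\<lambda>i::nat. if i = 1 then sa else if i = 2 then sb else 1"
  let ?c = "\<lambda>i::nat. if i = 1 then - sa * f 0 else if i = 2 then - sb * g 0 else 0"
  show "\<forall>i<3. ?s i = 1 \<or> ?s i = -1" using sa sb by auto
  show "\<forall>t. 0 \<le> t \<and> t < 14 \<longrightarrow> lee_map 14 3 id ?s ?c [t, f t, g t] = [t, (3*t) mod 14, (9*t) mod 14]"
  proof (intro allI impI)
    fix t :: int assume t: "0 \<le> t \<and> t < 14"
    have ft: "f t = (f 0 + a * t) mod 14" using hf t by blast
    have gt: "g t = (g 0 + b * t) mod 14" using hg t by blast
    have 1: "(sa * f t + - sa * f 0) mod 14 = (3 * t) mod 14"
      unfolding ft by (rule linmap[OF ea])
    have 2: "(sb * g t + - sb * g 0) mod 14 = (9 * t) mod 14"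
      unfolding gt by (rule linmap[OF eb])
    show "lee_map 14 3 id ?s ?c [t, f t, g t] = [t, (3*t) mod 14, (9*t) mod 14]"
      unfolding lee3 using 1 2 t by simp
  qed
qed

lemma finB:
  assumes Seq: "S = (\<lambda>t. [t, f t, g t]) ` {0..<14}"
    and hf: "\<forall>t. 0 \<le> t \<and> t < 14 \<longrightarrow> f t = (f 0 + b * t) mod 14"
    and hg: "\<forall>t. 0 \<le> t \<and> t < 14 \<longrightarrow> g t = (g 0 + a * t) mod 14"
    and sa: "sa = 1 \<or> sa = -1" and sb: "sb = 1 \<or> sb = -1"
    and ea: "sa * a = 3 + 14 * ma" and eb: "sb * b = 9 + 14 * mb"
  shows "lee_equiv 14 3 S Cset"
proof (rule finish[OF permutes_swap_id[of 1 "{..<3}" 2] _ Seq])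
  show "(1::nat) \<in> {..<3}" "(2::nat) \<in> {..<3}" by auto
  let ?s = "\<lambda>i::nat. if i = 1 then sa else if i = 2 then sb else 1"
  let ?c = "\<lambda>i::nat. if i = 1 then - sa * g 0 else if i = 2 then - sb * f 0 else 0"
  show "\<forall>i<3. ?s i = 1 \<or> ?s i = -1" using sa sb by auto
  show "\<forall>t. 0 \<le> t \<and> t < 14 \<longrightarrow> lee_map 14 3 (transpose 1 2) ?s ?c [t, f t, g t] = [t, (3*t) mod 14, (9*t) mod 14]"
  proof (intro allI impI)
    fix t :: int assume t: "0 \<le> t \<and> t < 14"
    have ft: "f t = (f 0 + b * t) mod 14" using hf t by blast
    have gt: "g t = (g 0 + a * t) mod 14" using hg t by blast
    have 1: "(sa * g t + - sa * g 0) mod 14 = (3 * t) mod 14"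
      unfolding gt by (rule linmap[OF ea])
    have 2: "(sb * f t + - sb * f 0) mod 14 = (9 * t) mod 14"
      unfolding ft by (rule linmap[OF eb])
    show "lee_map 14 3 (transpose 1 2) ?s ?c [t, f t, g t] = [t, (3*t) mod 14, (9*t) mod 14]"
      unfolding lee3 using 1 2 t by simp
  qed
qed

lemma C_pairs:
  assumes t: "0 \<le> t" "t < 14" and w: "0 \<le> w" "w < 14" and ne: "t \<noteq> w"
  shows "\<not> (nr t w \<and> nr ((3*t) mod 14) ((3*w) mod 14) \<and> nr ((9*t) mod 14) ((9*w) mod 14))"
  using cases14[OF t] cases14[OF w] ne by (elim disjE) (simp_all add: nr_def)

lemma C_indep: "sp_independent 5 14 3 Cset"
  unfolding sp_independent_def
proof
  show "Cset \<subseteq> sp_vertices 14 3" unfolding Cimg sp_vertices_def by auto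
  show "\<forall>u\<in>Cset. \<forall>v\<in>Cset. \<not> sp_adj 5 14 3 u v"
  proof (intro ballI)
    fix u v assume "u \<in> Cset" "v \<in> Cset"
    then obtain t w where u: "u = [t, (3*t) mod 14, (9*t) mod 14]" "0 \<le> t" "t < 14"
      and v: "v = [w, (3*w) mod 14, (9*w) mod 14]" "0 \<le> w" "w < 14" unfolding Cimg by auto
    show "\<not> sp_adj 5 14 3 u v"
    proof (cases "t = w")
      case True then show ?thesis unfolding sp_adj_iff u v by simp
    next
      case False then show ?thesis unfolding sp_adj_iff u v using C_pairs[OF u(2,3) v(2,3) False] by simp
    qed
  qed
qed

lemma C_card: "card Cset = 14"
proof -
  have "inj_on (\<lambda>t. [t, (3*t) mod 14, (9*t) mod 14]) {0..<14::int}" by (auto intro: inj_onI)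
  then show ?thesis unfolding Cimg by (simp add: card_image)
qed

theorem proposition9p6:
  shows "sp_independent 5 14 3 {map (\<lambda>a. (t * a) mod 14) [1, 3, 9] | t. t \<in> {0..<14::int}}
    \<and> card {map (\<lambda>a. (t * a) mod 14) [1, 3, 9] | t. t \<in> {0..<14::int}} = 14
    \<and> (\<forall>S. sp_independent 5 14 3 S \<and> card S = 14 \<longrightarrow>
          lee_equiv 14 3 S {map (\<lambda>a. (t * a) mod 14) [1, 3, 9] | t. t \<in> {0..<14::int}})"
proof -
  have main: "lee_equiv 14 3 S Cset" if ind: "sp_independent 5 14 3 S" and card: "card S = 14" for S
  proof -
    obtain f g where rf: "\<forall>t. 0 \<le> t \<and> t < 14 \<longrightarrow> 0 \<le> f t \<and> f t < 14 \<and> 0 \<le> g t \<and> g t < 14"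
      and Seq: "S = (\<lambda>t. [t, f t, g t]) ` {0..<14}"
      and indfg: "\<forall>y z. 0 \<le> y \<and> y < 14 \<and> 0 \<le> z \<and> z < 14 \<and> y \<noteq> z \<longrightarrow> \<not> nr y z \<or> \<not> nr (f y) (f z) \<or> \<not> nr (g y) (g z)"
      by (rule struct14[OF ind card])
    have indgf: "\<forall>y z. 0 \<le> y \<and> y < 14 \<and> 0 \<le> z \<and> z < 14 \<and> y \<noteq> z \<longrightarrow> \<not> nr y z \<or> \<not> nr (g y) (g z) \<or> \<not> nr (f y) (f z)"
      using indfg by blast
    have rgf: "\<forall>t. 0 \<le> t \<and> t < 14 \<longrightarrow> 0 \<le> g t \<and> g t < 14 \<and> 0 \<le> f t \<and> f t < 14" using rf by blast
    have rfh: "\<forall>t. 0 \<le> t \<and> t < 14 \<longrightarrow> 0 \<le> f t \<and> f t < 14" using rf by blast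
    have rgh: "\<forall>t. 0 \<le> t \<and> t < 14 \<longrightarrow> 0 \<le> g t \<and> g t < 14" using rf by blast
    obtain af bf where af: "af \<noteq> bf" and of: "\<forall>t. 0 \<le> t \<and> t < 14 \<longrightarrow> nr (f t) (f (pt t 1)) = af \<and>
       nr (f t) (f (pt t 2)) = bf \<and> nr (f t) (f (pt t 3)) = bf \<and> nr (f t) (f (pt t 4)) = af"
      using offsets[OF indfg rf] by blast
    obtain ag bg where ag: "ag \<noteq> bg" and og: "\<forall>t. 0 \<le> t \<and> t < 14 \<longrightarrow> nr (g t) (g (pt t 1)) = ag \<and>
       nr (g t) (g (pt t 2)) = bg \<and> nr (g t) (g (pt t 3)) = bg \<and> nr (g t) (g (pt t 4)) = ag"
      using offsets[OF indgf rgf] by blast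
    have p: "pt 0 1 = 1" "pt 0 2 = 2" by (simp_all add: pt_def)
    have n: "nr 0 1" "nr 0 2" by (simp_all add: nr_def)
    have d1: "\<not> (af \<and> ag)"
    proof -
      have "\<not> nr 0 1 \<or> \<not> nr (f 0) (f 1) \<or> \<not> nr (g 0) (g 1)" using indfg by simp
      moreover have "nr (f 0) (f 1) = af" "nr (g 0) (g 1) = ag" using of og p by auto
      ultimately show ?thesis using n by auto
    qed
    have d2: "\<not> (bf \<and> bg)"
    proof -
      have "\<not> nr 0 2 \<or> \<not> nr (f 0) (f 2) \<or> \<not> nr (g 0) (g 2)" using indfg by simp
      moreover have "nr (f 0) (f 2) = bf" "nr (g 0) (g 2) = bg" using of og p by auto
      ultimately show ?thesis using n by auto
    qed
    show ?thesis
    proof (cases af)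
      case True
      then have "\<not> bf" "\<not> ag" "bg" using af ag d1 by auto
      have Lf: "(\<forall>t. 0 \<le> t \<and> t < 14 \<longrightarrow> f t = (f 0 + 3 * t) mod 14) \<or>
                (\<forall>t. 0 \<le> t \<and> t < 14 \<longrightarrow> f t = (f 0 + (-3) * t) mod 14)"
        by (rule L3[OF rfh]) (use of True \<open>\<not> bf\<close> in auto)
      have Lg: "(\<forall>t. 0 \<le> t \<and> t < 14 \<longrightarrow> g t = (g 0 + 5 * t) mod 14) \<or>
                (\<forall>t. 0 \<le> t \<and> t < 14 \<longrightarrow> g t = (g 0 + 9 * t) mod 14)"
        by (rule L9[OF rgh]) (use og \<open>\<not> ag\<close> in auto)
      from Lf show ?thesis
      proof
        assume hf: "\<forall>t. 0 \<le> t \<and> t < 14 \<longrightarrow> f t = (f 0 + 3 * t) mod 14"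
        from Lg show ?thesis
        proof
          assume hg: "\<forall>t. 0 \<le> t \<and> t < 14 \<longrightarrow> g t = (g 0 + 5 * t) mod 14"
          show ?thesis by (rule finA[OF Seq hf hg, of 1 "-1" 0 "-1"]) simp_all
        next
          assume hg: "\<forall>t. 0 \<le> t \<and> t < 14 \<longrightarrow> g t = (g 0 + 9 * t) mod 14"
          show ?thesis by (rule finA[OF Seq hf hg, of 1 1 0 0]) simp_all
        qed
      next
        assume hf: "\<forall>t. 0 \<le> t \<and> t < 14 \<longrightarrow> f t = (f 0 + (-3) * t) mod 14"
        from Lg show ?thesis
        proof
          assume hg: "\<forall>t. 0 \<le> t \<and> t < 14 \<longrightarrow> g t = (g 0 + 5 * t) mod 14"
          show ?thesis by (rule finA[OF Seq hf hg, of "-1" "-1" 0 "-1"]) simp_all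
        next
          assume hg: "\<forall>t. 0 \<le> t \<and> t < 14 \<longrightarrow> g t = (g 0 + 9 * t) mod 14"
          show ?thesis by (rule finA[OF Seq hf hg, of "-1" 1 0 0]) simp_all
        qed
      qed
    next
      case False
      then have "bf" "\<not> bg" "ag" using af ag d2 by auto
      have Lf: "(\<forall>t. 0 \<le> t \<and> t < 14 \<longrightarrow> f t = (f 0 + 5 * t) mod 14) \<or>
                (\<forall>t. 0 \<le> t \<and> t < 14 \<longrightarrow> f t = (f 0 + 9 * t) mod 14)"
        by (rule L9[OF rfh]) (use of False in auto)
      have Lg: "(\<forall>t. 0 \<le> t \<and> t < 14 \<longrightarrow> g t = (g 0 + 3 * t) mod 14) \<or>
                (\<forall>t. 0 \<le> t \<and> t < 14 \<longrightarrow> g t = (g 0 + (-3) * t) mod 14)"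
        by (rule L3[OF rgh]) (use og \<open>ag\<close> \<open>\<not> bg\<close> in auto)
      from Lg show ?thesis
      proof
        assume hg: "\<forall>t. 0 \<le> t \<and> t < 14 \<longrightarrow> g t = (g 0 + 3 * t) mod 14"
        from Lf show ?thesis
        proof
          assume hf: "\<forall>t. 0 \<le> t \<and> t < 14 \<longrightarrow> f t = (f 0 + 5 * t) mod 14"
          show ?thesis by (rule finB[OF Seq hf hg, of 1 "-1" 0 "-1"]) simp_all
        next
          assume hf: "\<forall>t. 0 \<le> t \<and> t < 14 \<longrightarrow> f t = (f 0 + 9 * t) mod 14"
          show ?thesis by (rule finB[OF Seq hf hg, of 1 1 0 0]) simp_all
        qed
      next
        assume hg: "\<forall>t. 0 \<le> t \<and> t < 14 \<longrightarrow> g t = (g 0 + (-3) * t) mod 14"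
        from Lf show ?thesis
        proof
          assume hf: "\<forall>t. 0 \<le> t \<and> t < 14 \<longrightarrow> f t = (f 0 + 5 * t) mod 14"
          show ?thesis by (rule finB[OF Seq hf hg, of "-1" "-1" 0 "-1"]) simp_all
        next
          assume hf: "\<forall>t. 0 \<le> t \<and> t < 14 \<longrightarrow> f t = (f 0 + 9 * t) mod 14"
          show ?thesis by (rule finB[OF Seq hf hg, of "-1" 1 0 0]) simp_all
        qed
      qed
    qed
  qed
  show ?thesis using C_indep C_card main unfolding Cset_def by blast
qed

end
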